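(* Let $G$ consist of two parallel paths $P_1,P_2$ from $s$ to $d$ with $\mathrm{len}(P_1)<\mathrm{len}(P_2)$, and suppose $l_v=0$ for every vertex $v$ (so $l_{P_1}=l_{P_2}=0$). Suppose the dynamics is governed by the linear decision rule and that $p_{uv}(0)>0$ for every edge $(u,v)\in P_1$ (other initial pheromone levels and all initial flows at internal vertices are arbitrary nonnegative numbers). Let $f_s(0)>0$ and $b_d(0)>0$. (1) (Exponential increase.) If $f_s(t)=\lambda^t f_s(0)$ and $b_d(t)=\lambda^t b_d(0)$ for all $t\ge0$, for some $\lambda>1$, then there exist constants $C_1,C_2>0$ not depending on $\epsilon$ such that for all $\epsilon\in(0,1)$ and all integers $t\ge C_1+C_2\log(1/\epsilon)$, $\nu^f_{uv}(t)\ge 1-\epsilon$ and $\nu^b_{uv}(t)\ge1-\epsilon$ for every $(u,v)\in P_1$. (2) (Linear increase.) If $f_s(t)=f_s(0)+\alpha t$ and $b_d(t)=b_d(0)+\alpha t$ for all $t\ge0$, for some $\alpha>0$, then there exist a constant $K>0$ depending only on $\delta$ and $\mathrm{len}(P_2)$, and a constant $C>0$ not depending on $\epsilon$, such that for all $\epsilon\in(0,1)$ and all integers $t\ge C(1/\epsilon)^{K}$, $\nu^f_{uv}(t)\ge 1-\epsilon$ and $\nu^b_{uv}(t)\ge1-\epsilon$ for every $(u,v)\in P_1$. (The constants $C_1,C_2,C$ may depend on $\delta$, the input flow parameters, the path lengths and the initial configuration.)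
   Context: Model. $G=(V,E)$ is a finite directed graph with a source vertex $s$ and a destination vertex $d$. Time is discrete, $t=0,1,2,\dots$. The state at time $t$ consists of pheromone levels $p_{uv}(t)\ge 0$ for $(u,v)\in E$, forward flows $f_v(t)\ge 0$ and backward flows $b_v(t)\ge0$ for $v\in V$. Each vertex $v$ has a leakage parameter $l_v\in[0,1]$, and $\delta\in(0,1)$ is a fixed decay parameter. The values $f_s(t)$ and $b_d(t)$ are exogenous inputs (the flow newly appearing at $s$ and at $d$ at time $t$); all other flows are determined by the dynamics from the initial state. Linear decision rule: $f_{uv}(t)=f_u(t)\,p_{uv}(t)/\sum_{z:(u,z)\in E}p_{uz}(t)$ and $b_{uv}(t)=b_v(t)\,p_{uv}(t)/\sum_{z:(z,v)\in E}p_{zv}(t)$, with the convention that at a vertex with a single outgoing (resp. incoming) edge the entire forward (resp. backward) flow is sent along that edge. Updates: for $v\neq s$, $f_v(t+1)=(1-l_v)\sum_{z:(z,v)\in E}f_{zv}(t)$; for $u\ne d$, $b_u(t+1)=(1-l_u)\sum_{z:(u,z)\in E}b_{uz}(t)$; and $p_{uv}(t+1)=\delta\,(p_{uv}(t)+f_{uv}(t)+b_{uv}(t))$ for all $(u,v)\in E$. Normalized pheromone levels: $\nu^f_{uv}(t)=p_{uv}(t)/\sum_{z:(u,z)\in E}p_{uz}(t)$ and $\nu^b_{uv}(t)=p_{uv}(t)/\sum_{z:(z,v)\in E}p_{zv}(t)$. For a path $P$ from $s$ to $d$, its leakage is $l_P=1-\prod_{v\in P\setminus\{s,d\}}(1-l_v)$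 and its length $\mathrm{len}(P)$ is its number of edges. Two parallel paths: $G$ is the union of two directed paths $P_1,P_2$ from $s$ to $d$ that share no vertices other than $s$ and $d$. *)

theory Defs
  imports Complex_Main
begin

definition path_edges :: "'v list \<Rightarrow> ('v \<times> 'v) set" where
  "path_edges P = set (zip P (tl P))"

definition path_len :: "'v list \<Rightarrow> nat" where
  "path_len P = length P - 1"

definition two_parallel_paths ::
  "'v set \<Rightarrow> ('v \<times> 'v) set \<Rightarrow> 'v \<Rightarrow> 'v \<Rightarrow> 'v list \<Rightarrow> 'v list \<Rightarrow> bool" where
  "two_parallel_paths V E s d P1 P2 \<longleftrightarrow>
     length P1 \<ge> 2 \<and> length P2 \<ge> 2 \<and> distinct P1 \<and> distinct P2 \<and>
     hd P1 = s \<and> last P1 = d \<and> hd P2 = s \<and> last P2 = d \<and>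
     set P1 \<inter> set P2 = {s, d} \<and>
     V = set P1 \<union> set P2 \<and> E = path_edges P1 \<union> path_edges P2"

text \<open>Linear decision rule. States are indexed by time first:
  p t u v, f t v, b t v.  At a vertex with a single outgoing (incoming) edge the
  whole forward (backward) flow is sent along that edge.\<close>
definition fwd_flow ::
  "('v \<times> 'v) set \<Rightarrow> (nat \<Rightarrow> 'v \<Rightarrow> 'v \<Rightarrow> real) \<Rightarrow> (nat \<Rightarrow> 'v \<Rightarrow> real) \<Rightarrow> nat \<Rightarrow> 'v \<Rightarrow> 'v \<Rightarrow> real" where
  "fwd_flow E p f t u v =
     (if card {z. (u, z) \<in> E} = 1 then f t u
      else f t u * p t u v / (\<Sum>z\<in>{z. (u, z) \<in> E}. p t u z))"

definition bwd_flow ::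
  "('v \<times> 'v) set \<Rightarrow> (nat \<Rightarrow> 'v \<Rightarrow> 'v \<Rightarrow> real) \<Rightarrow> (nat \<Rightarrow> 'v \<Rightarrow> real) \<Rightarrow> nat \<Rightarrow> 'v \<Rightarrow> 'v \<Rightarrow> real" where
  "bwd_flow E p b t u v =
     (if card {z. (z, v) \<in> E} = 1 then b t v
      else b t v * p t u v / (\<Sum>z\<in>{z. (z, v) \<in> E}. p t z v))"

text \<open>The update rules of the dynamics (f t s and b t d are exogenous, hence unconstrained).\<close>
definition lin_dynamics ::
  "'v set \<Rightarrow> ('v \<times> 'v) set \<Rightarrow> 'v \<Rightarrow> 'v \<Rightarrow> ('v \<Rightarrow> real) \<Rightarrow> real \<Rightarrow>
   (nat \<Rightarrow> 'v \<Rightarrow> 'v \<Rightarrow> real) \<Rightarrow> (nat \<Rightarrow> 'v \<Rightarrow> real) \<Rightarrow> (nat \<Rightarrow> 'v \<Rightarrow> real) \<Rightarrow> bool" where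
  "lin_dynamics V E s d l \<delta> p f b \<longleftrightarrow>
     (\<forall>t. \<forall>v\<in>V. v \<noteq> s \<longrightarrow>
        f (Suc t) v = (1 - l v) * (\<Sum>z\<in>{z. (z, v) \<in> E}. fwd_flow E p f t z v)) \<and>
     (\<forall>t. \<forall>u\<in>V. u \<noteq> d \<longrightarrow>
        b (Suc t) u = (1 - l u) * (\<Sum>z\<in>{z. (u, z) \<in> E}. bwd_flow E p b t u z)) \<and>
     (\<forall>t. \<forall>(u, v)\<in>E.
        p (Suc t) u v = \<delta> * (p t u v + fwd_flow E p f t u v + bwd_flow E p b t u v))"

definition nu_f :: "('v \<times> 'v) set \<Rightarrow> (nat \<Rightarrow> 'v \<Rightarrow> 'v \<Rightarrow> real) \<Rightarrow> nat \<Rightarrow> 'v \<Rightarrow> 'v \<Rightarrow> real" where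
  "nu_f E p t u v = p t u v / (\<Sum>z\<in>{z. (u, z) \<in> E}. p t u z)"

definition nu_b :: "('v \<times> 'v) set \<Rightarrow> (nat \<Rightarrow> 'v \<Rightarrow> 'v \<Rightarrow> real) \<Rightarrow> nat \<Rightarrow> 'v \<Rightarrow> 'v \<Rightarrow> real" where
  "nu_b E p t u v = p t u v / (\<Sum>z\<in>{z. (z, v) \<in> E}. p t z v)"

definition pp_setup ::
  "'v set \<Rightarrow> ('v \<times> 'v) set \<Rightarrow> 'v \<Rightarrow> 'v \<Rightarrow> 'v list \<Rightarrow> 'v list \<Rightarrow> ('v \<Rightarrow> real) \<Rightarrow> real \<Rightarrow>
   (nat \<Rightarrow> 'v \<Rightarrow> 'v \<Rightarrow> real) \<Rightarrow> (nat \<Rightarrow> 'v \<Rightarrow> real) \<Rightarrow> (nat \<Rightarrow> 'v \<Rightarrow> real) \<Rightarrow> bool" where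
  "pp_setup V E s d P1 P2 l \<delta> p f b \<longleftrightarrow>
     two_parallel_paths V E s d P1 P2 \<and> path_len P1 < path_len P2 \<and>
     0 < \<delta> \<and> \<delta> < 1 \<and> (\<forall>v\<in>V. l v = 0) \<and>
     lin_dynamics V E s d l \<delta> p f b \<and>
     (\<forall>(u, v)\<in>E. p 0 u v \<ge> 0) \<and> (\<forall>(u, v)\<in>path_edges P1. p 0 u v > 0) \<and>
     (\<forall>v\<in>V. f 0 v \<ge> 0 \<and> b 0 v \<ge> 0) \<and> f 0 s > 0 \<and> b 0 d > 0"

end

theory Submission
  imports Defs
begin


lemma frac_mono_aux:
  fixes a b c d :: real
  assumes "0 \<le> a" "0 < b" "a \<le> c" "b \<le> d" "c \<le> d" "0 < d" and "a \<le> b"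
  shows "True" by simp

lemma hub_step:
  fixes P Q I a1 a2 J1 J2 M U L \<delta> :: real
  assumes d: "0<\<delta>" and P: "0 < P" and Q: "0 \<le> Q" and I: "0 \<le> I"
    and w: "Q/(P+Q) \<le> M" and M1: "M \<le> 1" and M0: "0 \<le> M"
    and a1: "J1*(1-M) \<le> a1" and a2: "0 \<le> a2" "a2 \<le> J2 * M" and J2: "0 \<le> J2" "J2 \<le> J1"
    and U: "P+Q+I+J2 \<le> U" and L: "0 < L" "L \<le> J1 - J2"
  shows "(\<delta>*(Q + I*(Q/(P+Q)) + a2)) / (\<delta>*(P + I*(1-Q/(P+Q)) + a1) + \<delta>*(Q + I*(Q/(P+Q)) + a2))
          \<le> M / (1 + (L/U)*(1-M))"
proof -
  define S where "S = P+Q"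
  define v where "v = Q/S"
  define A where "A = S + I"
  have S: "S > 0" using P Q S_def by simp
  have v0: "0 \<le> v" "v \<le> M" using Q S w unfolding v_def S_def by auto
  have A: "A > 0" using S I A_def by simp
  have Qe: "Q = v*S" using S v_def by simp
  have Pe: "P = (1-v)*S" using S v_def S_def by (simp add: field_simps)
  have num: "Q + I*(Q/(P+Q)) + a2 = v*A + a2" unfolding A_def using S S_def v_def by (simp add: field_simps)
  have den: "P + I*(1-Q/(P+Q)) + a1 + (Q + I*(Q/(P+Q)) + a2) = A + a1 + a2"
    unfolding A_def S_def by (simp add: algebra_simps)
  have J1M: "0 \<le> J1*(1-M)" using J2 M1 by simp
  have J2M: "0 \<le> J2*M" using J2 M0 by simp
  have MA: "M*A \<le> A" using M1 A by (simp add: mult_left_le_one_le)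
  have a1p: "0 \<le> a1" using a1 J1M by linarith
  have "(\<delta>*(Q + I*(Q/(P+Q)) + a2)) / (\<delta>*(P + I*(1-Q/(P+Q)) + a1) + \<delta>*(Q + I*(Q/(P+Q)) + a2))
       = (v*A + a2)/(A + a1 + a2)"
  proof -
    have "\<delta>*(P + I*(1-Q/(P+Q)) + a1) + \<delta>*(Q + I*(Q/(P+Q)) + a2) = \<delta>*(A + a1 + a2)"
      using den by (metis distrib_left)
    then show ?thesis using num d by simp
  qed
  also have "\<dots> \<le> (M*A + a2)/(A + J1*(1-M) + a2)"
  proof (rule frac_le)
    show "0 \<le> M*A + a2" using M0 A a2 by simp
    show "v*A + a2 \<le> M*A + a2" using v0 A by (simp add: mult_right_mono)
    show "0 < A + J1*(1-M) + a2" using A J1M a2 by linarith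
    show "A + J1*(1-M) + a2 \<le> A + a1 + a2" using a1 by simp
  qed
  also have "\<dots> \<le> (M*A + J2*M)/(A + J1*(1-M) + J2*M)"
  proof -
    have pos: "0 < A + J1*(1-M) + a2" using A J1M a2 by linarith
    have pos2: "0 < A + J1*(1-M) + J2*M" using A J1M J2M by linarith
    have le: "M*A + a2 \<le> A + J1*(1-M) + a2" using MA J1M by linarith
    have "(M*A + a2)*(A + J1*(1-M) + J2*M) \<le> (M*A + J2*M)*(A + J1*(1-M) + a2)"
    proof -
      have "(M*A + a2)*(A + J1*(1-M) + J2*M) - (M*A + J2*M)*(A + J1*(1-M) + a2)
            = (J2*M - a2)*(M*A - (A + J1*(1-M)))"
        by (simp add: algebra_simps)
      also have "\<dots> \<le> 0"
      proof -
        have "J2*M - a2 \<ge> 0" using a2 by simp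
        moreover have "M*A - (A + J1*(1-M)) \<le> 0"
          using MA J1M by linarith
        ultimately show ?thesis by (simp add: mult_nonneg_nonpos)
      qed
      finally show ?thesis by simp
    qed
    then show ?thesis using pos pos2 by (simp add: divide_simps)
  qed
  also have "\<dots> = M*(A+J2)/(A+J2+(J1-J2)*(1-M))" by (simp add: algebra_simps)
  also have "\<dots> \<le> M*U/(U + L*(1-M))"
  proof -
    have AU: "A + J2 \<le> U" using U A_def S_def by simp
    have p1: "0 < A+J2+(J1-J2)*(1-M)" using A J2 M1 by (simp add: add_pos_nonneg)
    have p2: "0 < U + L*(1-M)" using A J2 AU L M1 by (simp add: add_pos_nonneg)
    have "(A+J2)*(U + L*(1-M)) \<le> U*(A+J2+(J1-J2)*(1-M))"
    proof -
      have "(A+J2)*(U + L*(1-M)) = (A+J2)*U + (A+J2)*L*(1-M)" by (simp add: algebra_simps)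
      also have "\<dots> \<le> (A+J2)*U + U*(J1-J2)*(1-M)"
        using AU L M1 A J2 by (intro add_left_mono mult_right_mono mult_mono) auto
      finally show ?thesis by (simp add: algebra_simps)
    qed
    then have "M*((A+J2)*(U + L*(1-M))) \<le> M*(U*(A+J2+(J1-J2)*(1-M)))" using M0 by (rule mult_left_mono)
    then show ?thesis using p1 p2 by (simp add: divide_simps algebra_simps)
  qed
  also have "\<dots> = M / (1 + (L/U)*(1-M))"
  proof -
    have "U > 0" using A J2 U A_def S_def by simp
    then show ?thesis by (simp add: field_simps)
  qed
  finally show ?thesis .
qed



lemma window_induct:
  fixes x y G h :: "nat \<Rightarrow> real" and n T :: nat
  assumes n: "n \<ge> 1"
  and G01: "\<forall>t\<ge>T. 0 \<le> G t \<and> G t < 1"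
  and Gmono: "\<forall>t t'. T \<le> t \<longrightarrow> t \<le> t' \<longrightarrow> G t' \<le> G t"
  and init: "\<forall>t. T \<le> t \<longrightarrow> t < T+n \<longrightarrow> x t \<le> G t \<and> y t \<le> G t"
  and step: "\<forall>t M. T + n \<le> t+1 \<longrightarrow> 0 \<le> M \<longrightarrow> M < 1 \<longrightarrow>
        (\<forall>j. t+1-n \<le> j \<longrightarrow> j \<le> t \<longrightarrow> x j \<le> M \<and> y j \<le> M) \<longrightarrow>
        x(t+1) \<le> M/(1 + h t*(1-M)) \<and> y(t+1) \<le> M/(1+h t*(1-M))"
  and Gstep: "\<forall>t. T+n \<le> t+1 \<longrightarrow> G(t+1-n)/(1+h t*(1-G(t+1-n))) \<le> G(t+1)"
  shows "\<forall>t\<ge>T. x t \<le> G t \<and> y t \<le> G t"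
proof -
  have "T \<le> t \<longrightarrow> x t \<le> G t \<and> y t \<le> G t" for t
  proof (induction t rule: less_induct)
    case (less t)
    show ?case
    proof (intro impI)
      assume Tt: "T \<le> t"
      show "x t \<le> G t \<and> y t \<le> G t"
      proof (cases "t < T + n")
        case True then show ?thesis using init Tt by auto
      next
        case False
        then obtain t' where t': "t = t'+1" using n by (metis add.commute add_lessD1 less_add_one linorder_not_le nat_le_iff_add plus_1_eq_Suc Suc_eq_plus1 le_add1 le_less_trans not_less0 trans_less_add1 less_imp_Suc_add) 
        have tt: "T + n \<le> t'+1" using False t' by simp
        let ?M = "G(t'+1-n)"
        have Mr: "0 \<le> ?M" "?M < 1" using G01 tt by auto
        have win: "\<forall>j. t'+1-n \<le> j \<longrightarrow> j \<le> t' \<longrightarrow> x j \<le> ?M \<and> y j \<le> ?M"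
        proof (intro allI impI)
          fix j assume j: "t'+1-n \<le> j" "j \<le> t'"
          have Tj: "T \<le> j" using j tt by simp
          have "x j \<le> G j \<and> y j \<le> G j" using less.IH[of j] j t' Tj by simp
          moreover have "G j \<le> ?M" using Gmono j tt by auto
          ultimately show "x j \<le> ?M \<and> y j \<le> ?M" by auto
        qed
        have "x(t'+1) \<le> ?M/(1 + h t'*(1-?M)) \<and> y(t'+1) \<le> ?M/(1+h t'*(1-?M))"
          using step tt Mr win by blast
        then show ?thesis using Gstep tt t' by fastforce
      qed
    qed
  qed
  then show ?thesis by blast
qed



lemma exp_decay:
  fixes x y h :: "nat \<Rightarrow> real" and n T :: nat and h0 M0 :: real
  assumes n: "n \<ge> 1" and h0: "h0 > 0" and hge: "\<forall>t. h t \<ge> h0"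
  and M0: "0 \<le> M0" "M0 < 1"
  and init: "\<forall>t. T \<le> t \<longrightarrow> t < T+n \<longrightarrow> x t \<le> M0 \<and> y t \<le> M0"
  and step: "\<forall>t M. T + n \<le> t+1 \<longrightarrow> 0 \<le> M \<longrightarrow> M < 1 \<longrightarrow>
        (\<forall>j. t+1-n \<le> j \<longrightarrow> j \<le> t \<longrightarrow> x j \<le> M \<and> y j \<le> M) \<longrightarrow>
        x(t+1) \<le> M/(1 + h t*(1-M)) \<and> y(t+1) \<le> M/(1+h t*(1-M))"
  shows "\<exists>r. 0 < r \<and> r < 1 \<and> (\<forall>t\<ge>T. x t \<le> r^(t-(T+n)) \<and> y t \<le> r^(t-(T+n)))"
proof -
  define \<rho> where "\<rho> = 1/(1+h0*(1-M0))"
  define r where "r = root n \<rho>"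
  have den: "1+h0*(1-M0) > 1" using h0 M0 by simp
  have rho: "0 < \<rho>" "\<rho> < 1" using den unfolding \<rho>_def by auto
  have r: "0 < r" "r < 1" using rho n unfolding r_def by (auto simp: real_root_gt_zero)
  have rn: "r^n = \<rho>" using rho n unfolding r_def by simp
  define G where "G t = M0 * r^(t-(T+n))" for t
  have Gle: "0 \<le> G t \<and> G t \<le> M0" for t
  proof -
    have "r^(t-(T+n)) \<le> 1" using r by (simp add: power_le_one)
    then show ?thesis unfolding G_def using M0 r by (simp add: mult_left_le)
  qed
  have main: "\<forall>t\<ge>T. x t \<le> G t \<and> y t \<le> G t"
  proof (rule window_induct[where h=h, OF n])
    show "\<forall>t\<ge>T. 0 \<le> G t \<and> G t < 1" using Gle M0 by (meson order_le_less_trans)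
    show "\<forall>t t'. T \<le> t \<longrightarrow> t \<le> t' \<longrightarrow> G t' \<le> G t"
    proof (intro allI impI)
      fix t t' :: nat assume "T \<le> t" "t \<le> t'"
      then have "r^(t'-(T+n)) \<le> r^(t-(T+n))" using r by (intro power_decreasing) auto
      then show "G t' \<le> G t" unfolding G_def using M0 by (simp add: mult_left_mono)
    qed
    show "\<forall>t. T \<le> t \<longrightarrow> t < T+n \<longrightarrow> x t \<le> G t \<and> y t \<le> G t" using init unfolding G_def by simp
    show "\<forall>t M. T + n \<le> t+1 \<longrightarrow> 0 \<le> M \<longrightarrow> M < 1 \<longrightarrow>
        (\<forall>j. t+1-n \<le> j \<longrightarrow> j \<le> t \<longrightarrow> x j \<le> M \<and> y j \<le> M) \<longrightarrow>
        x(t+1) \<le> M/(1 + h t*(1-M)) \<and> y(t+1) \<le> M/(1+h t*(1-M))" by (rule step)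
    show "\<forall>t. T+n \<le> t+1 \<longrightarrow> G(t+1-n)/(1+h t*(1-G(t+1-n))) \<le> G(t+1)"
    proof (intro allI impI)
      fix t assume tt: "T+n \<le> t+1"
      let ?u = "t+1-n"
      have g: "0 \<le> G ?u" "G ?u \<le> M0" using Gle by auto
      have ht: "h0 \<le> h t" using hge by simp
      have "h0*(1-M0) \<le> h t*(1-G ?u)" using ht h0 g M0 by (intro mult_mono) auto
      then have "G ?u/(1+h t*(1-G ?u)) \<le> G ?u/(1+h0*(1-M0))"
        using den g by (intro divide_left_mono) auto
      also have "\<dots> = M0 * (r^(?u-(T+n)) * r^n)" unfolding G_def rn \<rho>_def by simp
      also have "\<dots> = M0 * r^(?u-(T+n)+n)" by (simp add: power_add)
      also have "\<dots> \<le> M0 * r^(t+1-(T+n))"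
        using r M0 by (intro mult_left_mono power_decreasing) auto
      finally show "G ?u/(1+h t*(1-G ?u)) \<le> G(t+1)" unfolding G_def by simp
    qed
  qed
  have "\<forall>t\<ge>T. x t \<le> r ^ (t - (T + n)) \<and> y t \<le> r ^ (t - (T + n))"
  proof (intro allI impI)
    fix t assume "T \<le> t"
    have "G t \<le> r^(t-(T+n))" unfolding G_def using M0 r by (simp add: mult_left_le_one_le)
    then show "x t \<le> r ^ (t - (T + n)) \<and> y t \<le> r ^ (t - (T + n))" using main \<open>T \<le> t\<close> by fastforce
  qed
  then show ?thesis using r by blast
qed



lemma core_ineq:
  fixes X k c :: real and n :: nat
  assumes n: "n \<ge> 1" and k: "0 < k" "k \<le> 1" and c: "c = k/(2*n)" and X: "X \<ge> 2*n+1"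
  shows "1/(1 + k/(X-1)) \<le> ((X-n)/X) powr c"
proof -
  have Xn: "X - n > 0" using X n by simp
  have X0: "X > 0" using Xn by simp
  have X1: "X - 1 > 0" using X n by simp
  define z where "z = k/(X-1)"
  have z: "z > 0" using k X1 z_def by simp
  have "ln (1/(1+z)) \<le> 1/(1+z) - 1" using z by (intro ln_le_minus_one) auto
  then have lnz: "z/(1+z) \<le> ln (1+z)" using z by (simp add: ln_div field_simps)
  have "ln (X/(X-n)) \<le> X/(X-n) - 1" using X0 Xn by (intro ln_le_minus_one) auto
  also have "\<dots> = n/(X-n)" using Xn by (simp add: field_simps)
  finally have lnX: "ln (X/(X-n)) \<le> n/(X-n)" .
  have key: "c * (n/(X-n)) \<le> z/(1+z)"
  proof -
    have e1: "c * (n/(X-n)) = k/(2*(X-n))" using c n Xn by (simp add: field_simps)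
    have X1k: "X - 1 + k > 0" using X1 k by simp
    have "1 + z = (X-1+k)/(X-1)" unfolding z_def using X1 by (simp add: field_simps)
    then have e2: "z/(1+z) = k/(X-1+k)" unfolding z_def using X1 X1k by simp
    have "X-1+k \<le> 2*(X-n)" using X k by simp
    then have "k/(2*(X-n)) \<le> k/(X-1+k)" using k X1 Xn by (intro divide_left_mono) auto
    then show ?thesis using e1 e2 by simp
  qed
  have c0: "c \<ge> 0" using c k by simp
  have "1/(1+z) = exp (- ln (1+z))" using z by (simp add: exp_minus inverse_eq_divide)
  also have "\<dots> \<le> exp (- (c * (n/(X-n))))" using key lnz by simp
  also have "\<dots> \<le> exp (c * ln ((X-n)/X))"
  proof -
    have "ln ((X-n)/X) = - ln (X/(X-n))" using X0 Xn by (simp add: ln_div)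
    then have "- (n/(X-n)) \<le> ln ((X-n)/X)" using lnX by simp
    then have "c * (- (n/(X-n))) \<le> c * ln ((X-n)/X)" using c0 by (rule mult_left_mono)
    then show ?thesis by simp
  qed
  also have "\<dots> = ((X-n)/X) powr c" using X0 Xn by (simp add: powr_def)
  finally show ?thesis unfolding z_def .
qed

lemma pow_decay:
  fixes x y h :: "nat \<Rightarrow> real" and n T :: nat and \<kappa> H M0 :: real
  assumes n: "n \<ge> 1" and \<kappa>: "0 < \<kappa>" "\<kappa> \<le> 1" and H: "H \<ge> 2*n" and hge: "\<forall>t. h t \<ge> \<kappa>/(real t + H)"
  and M0: "0 \<le> M0" "M0 < 1"
  and init: "\<forall>t. T \<le> t \<longrightarrow> t < T+n \<longrightarrow> x t \<le> M0 \<and> y t \<le> M0"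
  and step: "\<forall>t M. T + n \<le> t+1 \<longrightarrow> 0 \<le> M \<longrightarrow> M < 1 \<longrightarrow>
        (\<forall>j. t+1-n \<le> j \<longrightarrow> j \<le> t \<longrightarrow> x j \<le> M \<and> y j \<le> M) \<longrightarrow>
        x(t+1) \<le> M/(1 + h t*(1-M)) \<and> y(t+1) \<le> M/(1+h t*(1-M))"
  shows "\<forall>t\<ge>T. x t \<le> M0 * min 1 (((T+n+H)/(t+H)) powr (\<kappa>*(1-M0)/(2*n)))
                \<and> y t \<le> M0 * min 1 (((T+n+H)/(t+H)) powr (\<kappa>*(1-M0)/(2*n)))"
proof -
  define k where "k = \<kappa>*(1-M0)"
  define c where "c = k/(2*n)"
  define a where "a = real T + n + H"
  have k: "0 < k" "k \<le> 1" unfolding k_def using \<kappa> M0 by (auto simp: mult_le_one)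
  have c0: "c \<ge> 0" unfolding c_def using k by simp
  have a0: "a > 0" unfolding a_def using H n by simp
  define G where "G t = M0 * min 1 ((a/(t+H)) powr c)" for t :: nat
  have Gle: "0 \<le> G t \<and> G t \<le> M0" for t
    unfolding G_def using M0 by (auto simp: mult_left_le)
  have main: "\<forall>t\<ge>T. x t \<le> G t \<and> y t \<le> G t"
  proof (rule window_induct[where h=h, OF n])
    show "\<forall>t\<ge>T. 0 \<le> G t \<and> G t < 1" using Gle M0 by (meson order_le_less_trans)
    show "\<forall>t t'. T \<le> t \<longrightarrow> t \<le> t' \<longrightarrow> G t' \<le> G t"
    proof (intro allI impI)
      fix t t' :: nat assume "T \<le> t" "t \<le> t'"
      have p1: "0 < real t' + H" "0 < real t + H" using H n by auto
      then have "a/(t'+H) \<le> a/(t+H)" using a0 H \<open>t \<le> t'\<close> by (intro divide_left_mono) (auto intro: mult_pos_pos)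
      then have "(a/(t'+H)) powr c \<le> (a/(t+H)) powr c" using c0 a0 H by (intro powr_mono2) auto
      then show "G t' \<le> G t" unfolding G_def using M0 by (intro mult_left_mono) auto
    qed
    show "\<forall>t. T \<le> t \<longrightarrow> t < T+n \<longrightarrow> x t \<le> G t \<and> y t \<le> G t"
    proof (intro allI impI)
      fix t assume t: "T \<le> t" "t < T+n"
      have "1 \<le> a/(t+H)" unfolding a_def using t H by simp
      then have "1 \<le> (a/(t+H)) powr c" using c0 by (rule ge_one_powr_ge_zero)
      then have "G t = M0" unfolding G_def by simp
      then show "x t \<le> G t \<and> y t \<le> G t" using init t by simp
    qed
    show "\<forall>t M. T + n \<le> t+1 \<longrightarrow> 0 \<le> M \<longrightarrow> M < 1 \<longrightarrow>
        (\<forall>j. t+1-n \<le> j \<longrightarrow> j \<le> t \<longrightarrow> x j \<le> M \<and> y j \<le> M) \<longrightarrow>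
        x(t+1) \<le> M/(1 + h t*(1-M)) \<and> y(t+1) \<le> M/(1+h t*(1-M))" by (rule step)
    show "\<forall>t. T+n \<le> t+1 \<longrightarrow> G(t+1-n)/(1+h t*(1-G(t+1-n))) \<le> G(t+1)"
    proof (intro allI impI)
      fix t assume tt: "T+n \<le> t+1"
      let ?u = "t+1-n"
      define X where "X = real t + 1 + H"
      have uX: "real ?u + H = X - n" unfolding X_def using tt by (simp add: of_nat_diff)
      have X: "X \<ge> 2*n+1" unfolding X_def using H by simp
      have tH: "real t + H > 0" using H n by simp
      have g: "0 \<le> G ?u" "G ?u \<le> M0" using Gle by auto
      have ht: "\<kappa>/(real t + H) \<le> h t" using hge by simp
      have "k/(real t + H) = \<kappa>/(real t + H) * (1-M0)" unfolding k_def by simp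
      also have "\<dots> \<le> h t*(1-G ?u)" 
        using ht \<kappa> g M0 tH order_trans[OF _ ht, of 0] by (intro mult_mono) auto
      finally have hk: "k/(real t + H) \<le> h t*(1-G ?u)" .
      have pos: "0 < 1 + k/(real t + H)" using k tH by (simp add: add_pos_nonneg)
      have "G ?u/(1+h t*(1-G ?u)) \<le> G ?u/(1 + k/(real t + H))"
        using hk g pos by (intro divide_left_mono) auto
      also have "\<dots> = G ?u * (1/(1 + k/(X-1)))" unfolding X_def by simp
      also have "\<dots> \<le> G ?u * ((X-n)/X) powr c"
        using core_ineq[OF n k c_def X] g by (intro mult_left_mono) auto
      also have "\<dots> \<le> G (t+1)"
      proof -
        have Xn: "X - n > 0" "X > 0" using X by auto
        have q1: "((X-n)/X) powr c \<le> 1" using Xn c0 by (intro powr_le1) auto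
        have q0: "0 \<le> ((X-n)/X) powr c" by simp
        have "min 1 ((a/(X-n)) powr c) * ((X-n)/X) powr c \<le> min 1 ((a/X) powr c)"
        proof (rule min.boundedI)
          show "min 1 ((a/(X-n)) powr c) * ((X-n)/X) powr c \<le> 1"
            using q1 q0 by (simp add: mult_le_one)
          have "min 1 ((a/(X-n)) powr c) * ((X-n)/X) powr c \<le> (a/(X-n)) powr c * ((X-n)/X) powr c"
            using q0 by (intro mult_right_mono) auto
          also have "\<dots> = (a/(X-n) * ((X-n)/X)) powr c" using a0 Xn by (simp only: powr_mult)
          also have "\<dots> = (a/X) powr c" using Xn by simp
          finally show "min 1 ((a/(X-n)) powr c) * ((X-n)/X) powr c \<le> (a/X) powr c" .
        qed
        then have "M0 * (min 1 ((a/(X-n)) powr c) * ((X-n)/X) powr c) \<le> M0 * min 1 ((a/X) powr c)"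
          using M0 by (intro mult_left_mono) auto
        moreover have "G ?u = M0 * min 1 ((a/(X-n)) powr c)" unfolding G_def uX by simp
        moreover have "G (t+1) = M0 * min 1 ((a/X) powr c)" unfolding G_def X_def by (simp add: algebra_simps)
        ultimately show ?thesis by (simp add: mult.assoc)
      qed
      finally show "G ?u/(1+h t*(1-G ?u)) \<le> G(t+1)" .
    qed
  qed
  then show ?thesis unfolding G_def a_def c_def k_def by simp
qed



lemma lin_bound:
  fixes S :: "nat \<Rightarrow> real" and a c \<delta> :: real
  assumes d: "0 < \<delta>" "\<delta> < 1" and a: "0 \<le> a" and c: "0 \<le> c"
    and rec: "\<forall>t\<ge>T. S(t+1) \<le> \<delta>*(S t + a*t + c)"
  shows "\<exists>K. \<forall>t\<ge>T. S t \<le> a*\<delta>/(1-\<delta>)*t + K"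
proof -
  define \<sigma> where "\<sigma> = a*\<delta>/(1-\<delta>)"
  define K where "K = max \<bar>S T\<bar> (\<delta>*c/(1-\<delta>))"
  have sig: "\<delta>*(\<sigma> + a) = \<sigma>" unfolding \<sigma>_def using d by (simp add: field_simps)
  have s0: "\<sigma> \<ge> 0" unfolding \<sigma>_def using a d by simp
  have K1: "\<delta>*c \<le> (1-\<delta>)*K"
  proof -
    have "\<delta>*c/(1-\<delta>) \<le> K" unfolding K_def by simp
    then show ?thesis using d by (simp add: divide_le_eq mult.commute)
  qed
  have "T \<le> t \<longrightarrow> S t \<le> \<sigma>*t + K" for t
  proof (induction t)
    case 0 then show ?case unfolding K_def using s0 by auto
  next
    case (Suc t)
    show ?case
    proof
      assume Tt: "T \<le> Suc t"
      show "S (Suc t) \<le> \<sigma>*(Suc t) + K"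
      proof (cases "T = Suc t")
        case True
        have "S T \<le> K" unfolding K_def by simp
        moreover have "0 \<le> \<sigma>*(Suc t)" using s0 by simp
        ultimately show ?thesis using True by simp
      next
        case False
        then have Tt': "T \<le> t" using Tt by simp
        have "S (Suc t) \<le> \<delta>*(S t + a*t + c)" using rec Tt' by simp
        also have "\<dots> \<le> \<delta>*(\<sigma>*t + K + a*t + c)" using Suc Tt' d by simp
        also have "\<dots> = \<delta>*(\<sigma>+a)*t + \<delta>*K + \<delta>*c" by (simp add: algebra_simps)
        also have "\<dots> = \<sigma>*t + \<delta>*K + \<delta>*c" using sig by simp
        also have "\<dots> \<le> \<sigma>*(Suc t) + K" using K1 s0 by (simp add: algebra_simps)
        finally show ?thesis .
      qed
    qed
  qed
  then show ?thesis unfolding \<sigma>_def by blast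
qed

lemma exp_bound:
  fixes S :: "nat \<Rightarrow> real" and c \<delta> lam :: real
  assumes d: "0 < \<delta>" "\<delta> < 1" and lam: "lam > 1" and c: "0 \<le> c"
    and rec: "\<forall>t\<ge>T. S(t+1) \<le> \<delta>*(S t + c*lam^t)"
  shows "\<exists>K>0. \<forall>t\<ge>T. S t \<le> K*lam^t"
proof -
  define K where "K = max 1 (max (S T/lam^T) (\<delta>*c/(lam-\<delta>)))"
  have K0: "K > 0" unfolding K_def by simp
  have K1: "\<delta>*c \<le> (lam-\<delta>)*K"
  proof -
    have "\<delta>*c/(lam-\<delta>) \<le> K" unfolding K_def by simp
    then show ?thesis using d lam by (simp add: divide_le_eq mult.commute)
  qed
  have lp: "lam^t > 0" for t using lam by simp
  have "T \<le> t \<longrightarrow> S t \<le> K*lam^t" for t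
  proof (induction t)
    case 0 then show ?case unfolding K_def by auto
  next
    case (Suc t)
    show ?case
    proof
      assume Tt: "T \<le> Suc t"
      show "S (Suc t) \<le> K*lam^(Suc t)"
      proof (cases "T = Suc t")
        case True
        have "S T/lam^T \<le> K" unfolding K_def by simp
        then show ?thesis using True lp[of T] by (simp add: divide_le_eq)
      next
        case False
        then have Tt': "T \<le> t" using Tt by simp
        have "S (Suc t) \<le> \<delta>*(S t + c*lam^t)" using rec Tt' by simp
        also have "\<dots> \<le> \<delta>*(K*lam^t + c*lam^t)" using Suc Tt' d by simp
        also have "\<dots> = (\<delta>*K + \<delta>*c)*lam^t" by (simp add: algebra_simps)
        also have "\<dots> \<le> (lam*K)*lam^t" using K1 lp[of t] by (intro mult_right_mono) (auto simp: algebra_simps)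
        also have "\<dots> = K*lam^(Suc t)" by simp
        finally show ?thesis .
      qed
    qed
  qed
  then show ?thesis using K0 by blast
qed



lemma path_edges_iff:
  "(u,v) \<in> path_edges P \<longleftrightarrow> (\<exists>i. Suc i < length P \<and> u = P!i \<and> v = P!Suc i)"
proof
  assume "(u,v) \<in> path_edges P"
  then show "\<exists>i. Suc i < length P \<and> u = P!i \<and> v = P!Suc i"
  proof -
    from \<open>(u,v) \<in> path_edges P\<close> obtain i where i: "i < min (length P) (length (tl P))" "u = P!i" "v = tl P ! i"
      unfolding path_edges_def set_zip by auto
    then have "Suc i < length P" "v = P!Suc i" by (auto simp: nth_tl)
    then show ?thesis using i by blast
  qed
next
  assume "\<exists>i. Suc i < length P \<and> u = P!i \<and> v = P!Suc i"
  then obtain i where i: "Suc i < length P" "u = P!i" "v = P!Suc i" by blast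
  then have "i < min (length P) (length (tl P))" "tl P ! i = P ! Suc i" by (auto simp: nth_tl)
  then show "(u,v) \<in> path_edges P" unfolding path_edges_def set_zip using i by force
qed

lemma tpp_sym: "two_parallel_paths V E s d P1 P2 \<Longrightarrow> two_parallel_paths V E s d P2 P1"
  unfolding two_parallel_paths_def by (auto simp: Un_commute Int_commute)

lemma tpp_basic:
  assumes "two_parallel_paths V E s d P Q"
  shows "length P \<ge> 2" "distinct P" "P!0 = s" "P!(length P - 1) = d" "set P \<inter> set Q = {s,d}"
    "s \<noteq> d" "set P \<subseteq> V" "E = path_edges P \<union> path_edges Q"
proof -
  have h: "length P \<ge> 2" "distinct P" "hd P = s" "last P = d" "set P \<inter> set Q = {s,d}"
     "V = set P \<union> set Q" "E = path_edges P \<union> path_edges Q"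
    using assms unfolding two_parallel_paths_def by auto
  show "length P \<ge> 2" "distinct P" "set P \<inter> set Q = {s,d}" "set P \<subseteq> V"
    "E = path_edges P \<union> path_edges Q" using h by auto
  show P0: "P!0 = s" using h by (metis hd_conv_nth list.size(3) not_numeral_le_zero)
  show Pl: "P!(length P - 1) = d" using h by (metis last_conv_nth list.size(3) not_numeral_le_zero)
  have "P!0 \<noteq> P!(length P - 1)" using h(1,2) nth_eq_iff_index_eq[of P 0 "length P - 1"] by linarith
  then show "s \<noteq> d" using P0 Pl by simp
qed

lemma tpp_idx:
  assumes "two_parallel_paths V E s d P Q" "i < length P"
  shows "P!i = s \<longleftrightarrow> i = 0" "P!i = d \<longleftrightarrow> i = length P - 1" "P!i \<in> V"
proof -
  note b = tpp_basic[OF assms(1)]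
  have "P!i = P!0 \<longleftrightarrow> i = 0" using b(1,2) assms(2) nth_eq_iff_index_eq[of P i 0] by (cases P) auto
  then show "P!i = s \<longleftrightarrow> i = 0" using b(3) by simp
  have "P!i = P!(length P - 1) \<longleftrightarrow> i = length P - 1" using b(1,2) assms(2) nth_eq_iff_index_eq[of P i "length P - 1"] by (cases P) auto
  then show "P!i = d \<longleftrightarrow> i = length P - 1" using b(4) by simp
  show "P!i \<in> V" using b assms(2) by (meson nth_mem subsetD)
qed

lemma tpp_edge_P:
  assumes tp: "two_parallel_paths V E s d P Q" and i: "i < length P" and e: "(P!i, z) \<in> E"
    and ns: "0 < i"
  shows "Suc i < length P \<and> z = P!Suc i"
proof -
  note b = tpp_basic[OF tp]
  note b' = tpp_basic[OF tpp_sym[OF tp]]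
  have nd: "P!i \<noteq> s" using tpp_idx[OF tp i] ns by simp
  consider "(P!i, z) \<in> path_edges P" | "(P!i, z) \<in> path_edges Q" using e b by auto
  then show ?thesis
  proof cases
    case 1
    then obtain j where j: "Suc j < length P" "P!i = P!j" "z = P!Suc j" using path_edges_iff by metis
    have "i = j" using j i b(2) nth_eq_iff_index_eq by fastforce
    then show ?thesis using j by simp
  next
    case 2
    then obtain j where j: "Suc j < length Q" "P!i = Q!j" "z = Q!Suc j" using path_edges_iff by metis
    have "P!i \<in> set P \<inter> set Q" using j i by (metis IntI Suc_lessD nth_mem)
    then have "P!i = d" using b nd by auto
    then have "Q!j = d" using j by simp
    then have "j = length Q - 1" using tpp_idx[OF tpp_sym[OF tp], of j] j by simp
    then show ?thesis using j by simp
  qed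
qed

lemma tpp_edge_P_in:
  assumes tp: "two_parallel_paths V E s d P Q" and i: "i < length P" and e: "(z, P!i) \<in> E"
    and nd: "i < length P - 1"
  shows "0 < i \<and> z = P!(i - 1)"
proof -
  note b = tpp_basic[OF tp]
  have nd': "P!i \<noteq> d" using tpp_idx[OF tp i] nd by simp
  consider "(z, P!i) \<in> path_edges P" | "(z, P!i) \<in> path_edges Q" using e b by auto
  then show ?thesis
  proof cases
    case 1
    then obtain j where j: "Suc j < length P" "z = P!j" "P!i = P!Suc j" using path_edges_iff by metis
    have "i = Suc j" using j i b(2) nth_eq_iff_index_eq by fastforce
    then show ?thesis using j by simp
  next
    case 2
    then obtain j where j: "Suc j < length Q" "z = Q!j" "P!i = Q!Suc j" using path_edges_iff by metis
    have "P!i \<in> set P \<inter> set Q" using j i by (metis IntI nth_mem)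
    then have "P!i = s" using b nd' by auto
    then have "Q!Suc j = s" using j by simp
    then have "Suc j = 0" using tpp_idx[OF tpp_sym[OF tp], of "Suc j"] j by simp
    then show ?thesis by simp
  qed
qed

lemma tpp_out_internal:
  assumes tp: "two_parallel_paths V E s d P Q" and i: "0 < i" "i < length P - 1"
  shows "{z. (P!i, z) \<in> E} = {P!Suc i}"
proof -
  have "(P!i, P!Suc i) \<in> path_edges P" unfolding path_edges_iff by (rule exI[of _ i]) (use i in simp)
  then have "(P!i, P!Suc i) \<in> E" using tpp_basic(8)[OF tp] by simp
  moreover have "z = P!Suc i" if "(P!i, z) \<in> E" for z
    using tpp_edge_P[OF tp _ that i(1)] i by simp
  ultimately show ?thesis by blast
qed

lemma tpp_in_internal:
  assumes tp: "two_parallel_paths V E s d P Q" and i: "0 < i" "i < length P - 1"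
  shows "{z. (z, P!i) \<in> E} = {P!(i-1)}"
proof -
  have "(P!(i-1), P!Suc (i-1)) \<in> path_edges P" unfolding path_edges_iff by (rule exI[of _ "i-1"]) (use i in simp)
  then have "(P!(i-1), P!Suc (i-1)) \<in> E" using tpp_basic(8)[OF tp] by simp
  then have "(P!(i-1), P!i) \<in> E" using i by simp
  moreover have "z = P!(i-1)" if "(z, P!i) \<in> E" for z
    using tpp_edge_P_in[OF tp _ that i(2)] i by simp
  ultimately show ?thesis by blast
qed

lemma tpp_out_s:
  assumes tp: "two_parallel_paths V E s d P Q"
  shows "{z. (s, z) \<in> E} = {P!1, Q!1}"
proof -
  have bP: "P!0 = s" "length P \<ge> 2" using tpp_basic[OF tp] by auto
  have bQ: "Q!0 = s" "length Q \<ge> 2" using tpp_basic[OF tpp_sym[OF tp]] by auto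
  have "(P!0, P!Suc 0) \<in> path_edges P" unfolding path_edges_iff by (rule exI[of _ 0]) (use bP in simp)
  then have "(s, P!1) \<in> E" using tpp_basic(8)[OF tp] bP by simp
  moreover have "(Q!0, Q!Suc 0) \<in> path_edges Q" unfolding path_edges_iff by (rule exI[of _ 0]) (use bQ in simp)
  then have "(s, Q!1) \<in> E" using tpp_basic(8)[OF tp] bQ by simp
  moreover have "z \<in> {P!1, Q!1}" if zz: "(s,z) \<in> E" for z
  proof -
    consider "(s, z) \<in> path_edges P" | "(s, z) \<in> path_edges Q" using zz tpp_basic(8)[OF tp] by auto
    then show ?thesis
    proof cases
      case 1
      then obtain j where j: "Suc j < length P" "s = P!j" "z = P!Suc j" using path_edges_iff by metis
      then have "j = 0" using tpp_idx[OF tp, of j] by simp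
      then show ?thesis using j by simp
    next
      case 2
      then obtain j where j: "Suc j < length Q" "s = Q!j" "z = Q!Suc j" using path_edges_iff by metis
      then have "j = 0" using tpp_idx[OF tpp_sym[OF tp], of j] by simp
      then show ?thesis using j by simp
    qed
  qed
  ultimately show ?thesis by blast
qed

lemma tpp_in_d:
  assumes tp: "two_parallel_paths V E s d P Q"
  shows "{z. (z, d) \<in> E} = {P!(length P - 2), Q!(length Q - 2)}"
proof -
  have bP: "P!(length P - 1) = d" "length P \<ge> 2" using tpp_basic[OF tp] by auto
  have bQ: "Q!(length Q - 1) = d" "length Q \<ge> 2" using tpp_basic[OF tpp_sym[OF tp]] by auto
  have "(P!(length P - 2), P!Suc (length P - 2)) \<in> path_edges P" unfolding path_edges_iff by (rule exI[of _ "length P - 2"]) (use bP in simp)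
  then have "(P!(length P - 2), P!Suc (length P - 2)) \<in> E" using tpp_basic(8)[OF tp] by simp
  moreover have "Suc (length P - 2) = length P - 1" using bP by simp
  moreover have "(Q!(length Q - 2), Q!Suc (length Q - 2)) \<in> path_edges Q" unfolding path_edges_iff by (rule exI[of _ "length Q - 2"]) (use bQ in simp)
  then have "(Q!(length Q - 2), Q!Suc (length Q - 2)) \<in> E" using tpp_basic(8)[OF tp] by simp
  moreover have "Suc (length Q - 2) = length Q - 1" using bQ by simp
  moreover have "z \<in> {P!(length P - 2), Q!(length Q - 2)}" if zz: "(z,d) \<in> E" for z
  proof -
    consider "(z, d) \<in> path_edges P" | "(z, d) \<in> path_edges Q" using zz tpp_basic(8)[OF tp] by auto
    then show ?thesis
    proof cases
      case 1
      then obtain j where j: "Suc j < length P" "z = P!j" "d = P!Suc j" using path_edges_iff by metis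
      then have "Suc j = length P - 1" using tpp_idx[OF tp, of "Suc j"] by simp
      then have "j = length P - 2" by linarith
      then show ?thesis using j by simp
    next
      case 2
      then obtain j where j: "Suc j < length Q" "z = Q!j" "d = Q!Suc j" using path_edges_iff by metis
      then have "Suc j = length Q - 1" using tpp_idx[OF tpp_sym[OF tp], of "Suc j"] by simp
      then have "j = length Q - 2" by linarith
      then show ?thesis using j by simp
    qed
  qed
  ultimately have "(P!(length P - 2), d) \<in> E" "(Q!(length Q - 2), d) \<in> E"
     "\<And>z. (z, d) \<in> E \<Longrightarrow> z \<in> {P!(length P - 2), Q!(length Q - 2)}" using bP bQ by auto
  then show ?thesis by blast
qed

lemma tpp_distinct_s:
  assumes tp: "two_parallel_paths V E s d P Q" and lQ: "length Q \<ge> 3"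
  shows "P!1 \<noteq> Q!1"
proof
  assume eq: "P!1 = Q!1"
  have lP: "length P \<ge> 2" using tpp_basic[OF tp] by auto
  have "P!1 \<in> set P \<inter> set Q" proof -
    have "1 < length P" "1 < length Q" using lP lQ by auto
    then show ?thesis using eq by (metis IntI nth_mem)
  qed
  then have "P!1 = s \<or> P!1 = d" using tpp_basic[OF tp] by auto
  moreover have "P!1 \<noteq> s" using tpp_idx[OF tp, of 1] lP by simp
  moreover have "Q!1 \<noteq> d" using tpp_idx[OF tpp_sym[OF tp], of 1] lQ by simp
  ultimately show False using eq by simp
qed

lemma tpp_distinct_d:
  assumes tp: "two_parallel_paths V E s d P Q" and lQ: "length Q \<ge> 3"
  shows "P!(length P - 2) \<noteq> Q!(length Q - 2)"
proof
  assume eq: "P!(length P - 2) = Q!(length Q - 2)"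
  have lP: "length P \<ge> 2" using tpp_basic[OF tp] by auto
  have "P!(length P - 2) \<in> set P \<inter> set Q" proof -
    have "length P - 2 < length P" "length Q - 2 < length Q" using lP lQ by auto
    then show ?thesis using eq by (metis IntI nth_mem)
  qed
  then have "P!(length P - 2) = s \<or> P!(length P - 2) = d" using tpp_basic[OF tp] by auto
  moreover have "P!(length P - 2) \<noteq> d" using tpp_idx[OF tp, of "length P - 2"] lP by simp
  moreover have "Q!(length Q - 2) \<noteq> s" using tpp_idx[OF tpp_sym[OF tp], of "length Q - 2"] lQ by simp
  ultimately show False using eq by simp
qed



locale PPD =
  fixes V :: "'v set" and E :: "('v \<times> 'v) set" and s d :: 'v and P1 P2 :: "'v list"
    and l :: "'v \<Rightarrow> real" and \<delta> :: real and p :: "nat \<Rightarrow> 'v \<Rightarrow> 'v \<Rightarrow> real"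
    and f b :: "nat \<Rightarrow> 'v \<Rightarrow> real"
  assumes pp: "pp_setup V E s d P1 P2 l \<delta> p f b"
    and Fnn: "\<forall>t. f t s \<ge> 0" and Bnn: "\<forall>t. b t d \<ge> 0"
begin

lemma tp: "two_parallel_paths V E s d P1 P2" using pp unfolding pp_setup_def by simp
lemma tp': "two_parallel_paths V E s d P2 P1" using tpp_sym[OF tp] .
lemma lens: "length P1 < length P2" "length P1 \<ge> 2" "length P2 \<ge> 3"
  using pp tpp_basic[OF tp] tpp_basic[OF tp'] unfolding pp_setup_def path_len_def by auto
lemma dpos: "0 < \<delta>" "\<delta> < 1" using pp unfolding pp_setup_def by auto
lemma l0: "\<forall>v\<in>V. l v = 0" using pp unfolding pp_setup_def by auto

lemma fdyn: "v \<in> V \<Longrightarrow> v \<noteq> s \<Longrightarrow> f (Suc t) v = (\<Sum>z\<in>{z. (z, v) \<in> E}. fwd_flow E p f t z v)"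
  using pp l0 unfolding pp_setup_def lin_dynamics_def by auto
lemma bdyn: "u \<in> V \<Longrightarrow> u \<noteq> d \<Longrightarrow> b (Suc t) u = (\<Sum>z\<in>{z. (u, z) \<in> E}. bwd_flow E p b t u z)"
  using pp l0 unfolding pp_setup_def lin_dynamics_def by auto
lemma pdyn: "(u,v) \<in> E \<Longrightarrow> p (Suc t) u v = \<delta> * (p t u v + fwd_flow E p f t u v + bwd_flow E p b t u v)"
  using pp unfolding pp_setup_def lin_dynamics_def by auto

lemma EV: "(u,v) \<in> E \<Longrightarrow> u \<in> V \<and> v \<in> V"
proof -
  assume e: "(u,v) \<in> E"
  have "\<And>P Q. two_parallel_paths V E s d P Q \<Longrightarrow> (u,v) \<in> path_edges P \<Longrightarrow> u \<in> V \<and> v \<in> V"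
  proof -
    fix P Q assume t: "two_parallel_paths V E s d P Q" and "(u,v) \<in> path_edges P"
    then obtain i where i: "Suc i < length P" "u = P!i" "v = P!Suc i" using path_edges_iff by metis
    then show "u \<in> V \<and> v \<in> V" using tpp_idx(3)[OF t, of i] tpp_idx(3)[OF t, of "Suc i"] by simp
  qed
  then show ?thesis using e tp tp' tpp_basic(8)[OF tp] by blast
qed

lemma finE: "finite E"
proof -
  have "finite (path_edges P)" for P :: "'v list" unfolding path_edges_def by simp
  then show ?thesis using tpp_basic(8)[OF tp] by simp
qed

lemma fin_out: "finite {z. (u,z) \<in> E}"
proof -
  have "{z. (u,z) \<in> E} \<subseteq> snd ` E" by force
  then show ?thesis using finE finite_subset by blast
qed
lemma fin_in: "finite {z. (z,v) \<in> E}"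
proof -
  have "{z. (z,v) \<in> E} \<subseteq> fst ` E" by force
  then show ?thesis using finE finite_subset by blast
qed

lemma nonneg: "(\<forall>u v. (u,v) \<in> E \<longrightarrow> p t u v \<ge> 0) \<and> (\<forall>v\<in>V. f t v \<ge> 0 \<and> b t v \<ge> 0)"
proof (induction t)
  case 0 then show ?case using pp unfolding pp_setup_def by auto
next
  case (Suc t)
  have fw: "fwd_flow E p f t u v \<ge> 0" if "(u,v) \<in> E" for u v
  proof -
    have "f t u \<ge> 0" using Suc EV[OF that] by auto
    moreover have "p t u v \<ge> 0" using Suc that by auto
    moreover have "(\<Sum>z\<in>{z. (u, z) \<in> E}. p t u z) \<ge> 0" using Suc by (intro sum_nonneg) auto
    ultimately show ?thesis unfolding fwd_flow_def by simp
  qed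
  have bw: "bwd_flow E p b t u v \<ge> 0" if "(u,v) \<in> E" for u v
  proof -
    have "b t v \<ge> 0" using Suc EV[OF that] by auto
    moreover have "p t u v \<ge> 0" using Suc that by auto
    moreover have "(\<Sum>z\<in>{z. (z, v) \<in> E}. p t z v) \<ge> 0" using Suc by (intro sum_nonneg) auto
    ultimately show ?thesis unfolding bwd_flow_def by simp
  qed
  have P: "\<forall>u v. (u,v) \<in> E \<longrightarrow> p (Suc t) u v \<ge> 0"
  proof (intro allI impI)
    fix u v assume e: "(u,v) \<in> E"
    have "p t u v \<ge> 0" using Suc e by auto
    then show "p (Suc t) u v \<ge> 0" using pdyn[OF e] fw[OF e] bw[OF e] dpos by simp
  qed
  have F: "f (Suc t) v \<ge> 0" if "v \<in> V" for v
  proof (cases "v = s")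
    case True then show ?thesis using Fnn by simp
  next
    case False
    have "0 \<le> (\<Sum>z\<in>{z. (z, v) \<in> E}. fwd_flow E p f t z v)" using fw by (intro sum_nonneg) auto
    then show ?thesis using fdyn[OF that False] by simp
  qed
  have B: "b (Suc t) v \<ge> 0" if "v \<in> V" for v
  proof (cases "v = d")
    case True then show ?thesis using Bnn by simp
  next
    case False
    have "0 \<le> (\<Sum>z\<in>{z. (v, z) \<in> E}. bwd_flow E p b t v z)" using bw by (intro sum_nonneg) auto
    then show ?thesis using bdyn[OF that False] by simp
  qed
  show ?case using P F B by blast
qed

lemma fw_nn: "(u,v) \<in> E \<Longrightarrow> fwd_flow E p f t u v \<ge> 0"
proof -
  assume e: "(u,v) \<in> E"
  have "f t u \<ge> 0" using nonneg EV[OF e] by auto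
  moreover have "p t u v \<ge> 0" using nonneg e by auto
  moreover have "(\<Sum>z\<in>{z. (u, z) \<in> E}. p t u z) \<ge> 0" using nonneg by (intro sum_nonneg) auto
  ultimately show ?thesis unfolding fwd_flow_def by simp
qed
lemma bw_nn: "(u,v) \<in> E \<Longrightarrow> bwd_flow E p b t u v \<ge> 0"
proof -
  assume e: "(u,v) \<in> E"
  have "b t v \<ge> 0" using nonneg EV[OF e] by auto
  moreover have "p t u v \<ge> 0" using nonneg e by auto
  moreover have "(\<Sum>z\<in>{z. (z, v) \<in> E}. p t z v) \<ge> 0" using nonneg by (intro sum_nonneg) auto
  ultimately show ?thesis unfolding bwd_flow_def by simp
qed

lemma ppos: "(u,v) \<in> path_edges P1 \<Longrightarrow> p t u v > 0"
proof (induction t)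
  case 0 then show ?case using pp unfolding pp_setup_def by auto
next
  case (Suc t)
  have e: "(u,v) \<in> E" using Suc.prems tpp_basic(8)[OF tp] by simp
  then show ?case using pdyn[OF e] fw_nn[OF e] bw_nn[OF e] dpos Suc by (simp add: add_pos_nonneg)
qed

end


context PPD begin

lemma fwd_step:
  assumes t: "two_parallel_paths V E s d P Q" and i: "0 < i" "i < length P - 1"
  shows "fwd_flow E p f (Suc t) (P!i) (P!Suc i) = fwd_flow E p f t (P!(i-1)) (P!i)"
proof -
  have o: "{z. (P!i, z) \<in> E} = {P!Suc i}" using tpp_out_internal[OF t i] .
  have inn: "{z. (z, P!i) \<in> E} = {P!(i-1)}" using tpp_in_internal[OF t i] .
  have iv: "P!i \<in> V" "P!i \<noteq> s" using tpp_idx[OF t, of i] i by auto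
  have "fwd_flow E p f (Suc t) (P!i) (P!Suc i) = f (Suc t) (P!i)" unfolding fwd_flow_def o by simp
  also have "\<dots> = fwd_flow E p f t (P!(i-1)) (P!i)" using fdyn[OF iv] inn by simp
  finally show ?thesis .
qed

lemma fwd_chain:
  assumes t: "two_parallel_paths V E s d P Q"
  shows "i < length P - 1 \<Longrightarrow> fwd_flow E p f (t+i) (P!i) (P!Suc i) = fwd_flow E p f t (P!0) (P!1)"
proof (induction i)
  case 0 then show ?case by simp
next
  case (Suc i)
  have "fwd_flow E p f (t + Suc i) (P!Suc i) (P!Suc (Suc i)) = fwd_flow E p f (t+i) (P!i) (P!Suc i)"
    using fwd_step[OF t, of "Suc i" "t+i"] Suc.prems by simp
  then show ?case using Suc by simp
qed

lemma bwd_step: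
  assumes t: "two_parallel_paths V E s d P Q" and i: "0 < i" "i < length P - 1"
  shows "bwd_flow E p b (Suc t) (P!(i-1)) (P!i) = bwd_flow E p b t (P!i) (P!Suc i)"
proof -
  have o: "{z. (P!i, z) \<in> E} = {P!Suc i}" using tpp_out_internal[OF t i] .
  have inn: "{z. (z, P!i) \<in> E} = {P!(i-1)}" using tpp_in_internal[OF t i] .
  have iv: "P!i \<in> V" "P!i \<noteq> d" using tpp_idx[OF t, of i] i by auto
  have "bwd_flow E p b (Suc t) (P!(i-1)) (P!i) = b (Suc t) (P!i)" unfolding bwd_flow_def inn by simp
  also have "\<dots> = bwd_flow E p b t (P!i) (P!Suc i)" using bdyn[OF iv] o by simp
  finally show ?thesis .
qed

lemma bwd_chain:
  assumes t: "two_parallel_paths V E s d P Q"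
  shows "j < length P - 1 \<Longrightarrow> bwd_flow E p b (t+j) (P!(length P - 2 - j)) (P!(length P - 1 - j))
           = bwd_flow E p b t (P!(length P - 2)) (P!(length P - 1))"
proof (induction j)
  case 0 then show ?case by simp
next
  case (Suc j)
  define i where "i = length P - 2 - j"
  have i: "0 < i" "i < length P - 1" using Suc.prems unfolding i_def by auto
  have e1: "length P - 2 - Suc j = i - 1" "length P - 1 - Suc j = i" unfolding i_def using Suc.prems by auto
  have e2: "Suc i = length P - 1 - j" unfolding i_def using Suc.prems by auto
  have "bwd_flow E p b (t + Suc j) (P!(length P - 2 - Suc j)) (P!(length P - 1 - Suc j))
        = bwd_flow E p b (t + j) (P!i) (P!Suc i)"
    unfolding e1 using bwd_step[OF t i, of "t+j"] by simp
  then show ?case using Suc e2 unfolding i_def by simp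
qed

end


context PPD begin

definition "m = length P1 - 1"
definition "n = length P2 - 1"
definition "F t = f t s"
definition "B t = b t d"
definition "Ps t = p t s (P1!1)"
definition "Qs t = p t s (P2!1)"
definition "Pd t = p t (P1!(length P1 - 2)) d"
definition "Qd t = p t (P2!(length P2 - 2)) d"
definition "x t = Qs t / (Ps t + Qs t)"
definition "y t = Qd t / (Pd t + Qd t)"

lemma mn: "1 \<le> m" "m < n" "2 \<le> n" using lens unfolding m_def n_def by auto

lemma P1s: "P1!0 = s" "P1!(length P1 - 1) = d" using tpp_basic[OF tp] by auto
lemma P2s: "P2!0 = s" "P2!(length P2 - 1) = d" using tpp_basic[OF tp'] by auto

lemma edge_first: "two_parallel_paths V E s d P Q \<Longrightarrow> (s, P!1) \<in> E"
proof -
  assume t: "two_parallel_paths V E s d P Q"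
  have "(P!0, P!Suc 0) \<in> path_edges P" unfolding path_edges_iff
    by (rule exI[of _ 0]) (use tpp_basic(1)[OF t] in simp)
  then show ?thesis using tpp_basic(3,8)[OF t] by simp
qed
lemma edge_last: "two_parallel_paths V E s d P Q \<Longrightarrow> (P!(length P - 2), d) \<in> E"
proof -
  assume t: "two_parallel_paths V E s d P Q"
  have "(P!(length P - 2), P!Suc (length P - 2)) \<in> path_edges P" unfolding path_edges_iff
    by (rule exI[of _ "length P - 2"]) (use tpp_basic(1)[OF t] in simp)
  moreover have "Suc (length P - 2) = length P - 1" using tpp_basic(1)[OF t] by simp
  ultimately show ?thesis using tpp_basic(4,8)[OF t] by simp
qed

lemma Ps_pos: "Ps t > 0"
proof -
  have "(P1!0, P1!Suc 0) \<in> path_edges P1" unfolding path_edges_iff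
    by (rule exI[of _ 0]) (use lens in simp)
  then show ?thesis unfolding Ps_def using ppos P1s by simp
qed
lemma Pd_pos: "Pd t > 0"
proof -
  have "(P1!(length P1 - 2), P1!Suc (length P1 - 2)) \<in> path_edges P1" unfolding path_edges_iff
    by (rule exI[of _ "length P1 - 2"]) (use lens in simp)
  moreover have "Suc (length P1 - 2) = length P1 - 1" using lens by simp
  ultimately show ?thesis unfolding Pd_def using ppos P1s by simp
qed
lemma Qs_nn: "Qs t \<ge> 0" unfolding Qs_def using nonneg edge_first[OF tp'] by blast
lemma Qd_nn: "Qd t \<ge> 0" unfolding Qd_def using nonneg edge_last[OF tp'] by blast
lemma x_range: "0 \<le> x t" "x t < 1" unfolding x_def using Ps_pos[of t] Qs_nn[of t] by auto
lemma y_range: "0 \<le> y t" "y t < 1" unfolding y_def using Pd_pos[of t] Qd_nn[of t] by auto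
lemma F_nn: "F t \<ge> 0" unfolding F_def using Fnn by simp
lemma B_nn: "B t \<ge> 0" unfolding B_def using Bnn by simp

lemma out_s: "{z. (s, z) \<in> E} = {P1!1, P2!1}" "P1!1 \<noteq> P2!1"
  using tpp_out_s[OF tp] tpp_distinct_s[OF tp lens(3)] by auto
lemma in_d: "{z. (z, d) \<in> E} = {P1!(length P1 - 2), P2!(length P2 - 2)}"
    "P1!(length P1 - 2) \<noteq> P2!(length P2 - 2)"
  using tpp_in_d[OF tp] tpp_distinct_d[OF tp lens(3)] by auto

lemma fwd_s: "fwd_flow E p f t s (P1!1) = F t * (1 - x t)" "fwd_flow E p f t s (P2!1) = F t * x t"
proof -
  have c: "card {z. (s, z) \<in> E} = 2" using out_s by simp
  have sm: "(\<Sum>z\<in>{z. (s, z) \<in> E}. p t s z) = Ps t + Qs t" using out_s unfolding Ps_def Qs_def by simp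
  have pq: "Ps t + Qs t > 0" using Ps_pos[of t] Qs_nn[of t] by simp
  have "1 - x t = Ps t/(Ps t + Qs t)" unfolding x_def using pq by (simp add: field_simps)
  then show "fwd_flow E p f t s (P1!1) = F t * (1 - x t)" unfolding fwd_flow_def c sm F_def Ps_def by simp
  show "fwd_flow E p f t s (P2!1) = F t * x t" unfolding fwd_flow_def c sm F_def Qs_def x_def by simp
qed

lemma bwd_d: "bwd_flow E p b t (P1!(length P1 - 2)) d = B t * (1 - y t)"
    "bwd_flow E p b t (P2!(length P2 - 2)) d = B t * y t"
proof -
  have c: "card {z. (z, d) \<in> E} = 2" using in_d by simp
  have sm: "(\<Sum>z\<in>{z. (z, d) \<in> E}. p t z d) = Pd t + Qd t" using in_d unfolding Pd_def Qd_def by simp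
  have pq: "Pd t + Qd t > 0" using Pd_pos[of t] Qd_nn[of t] by simp
  have "1 - y t = Pd t/(Pd t + Qd t)" unfolding y_def using pq by (simp add: field_simps)
  then show "bwd_flow E p b t (P1!(length P1 - 2)) d = B t * (1 - y t)" unfolding bwd_flow_def c sm B_def Pd_def by simp
  show "bwd_flow E p b t (P2!(length P2 - 2)) d = B t * y t" unfolding bwd_flow_def c sm B_def Qd_def y_def by simp
qed

lemma arr_s: "bwd_flow E p b (t + (m-1)) s (P1!1) = B t * (1 - y t)"
    "bwd_flow E p b (t + (n-1)) s (P2!1) = B t * y t"
proof -
  have "bwd_flow E p b (t + (length P1 - 2)) (P1!(length P1 - 2 - (length P1 - 2))) (P1!(length P1 - 1 - (length P1 - 2)))
     = bwd_flow E p b t (P1!(length P1 - 2)) (P1!(length P1 - 1))"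
    using bwd_chain[OF tp, of "length P1 - 2" t] lens by simp
  moreover have "length P1 - 1 - (length P1 - 2) = 1" using lens by simp
  ultimately show "bwd_flow E p b (t + (m-1)) s (P1!1) = B t * (1 - y t)"
    using bwd_d P1s unfolding m_def by (simp add: numeral_2_eq_2)
  have "bwd_flow E p b (t + (length P2 - 2)) (P2!(length P2 - 2 - (length P2 - 2))) (P2!(length P2 - 1 - (length P2 - 2)))
     = bwd_flow E p b t (P2!(length P2 - 2)) (P2!(length P2 - 1))"
    using bwd_chain[OF tp', of "length P2 - 2" t] lens by simp
  moreover have "length P2 - 1 - (length P2 - 2) = 1" using lens by simp
  ultimately show "bwd_flow E p b (t + (n-1)) s (P2!1) = B t * y t"
    using bwd_d P2s unfolding n_def by (simp add: numeral_2_eq_2)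
qed

lemma arr_d: "fwd_flow E p f (t + (m-1)) (P1!(length P1 - 2)) d = F t * (1 - x t)"
    "fwd_flow E p f (t + (n-1)) (P2!(length P2 - 2)) d = F t * x t"
proof -
  have "fwd_flow E p f (t + (length P1 - 2)) (P1!(length P1 - 2)) (P1!Suc (length P1 - 2)) = fwd_flow E p f t (P1!0) (P1!1)"
    using fwd_chain[OF tp, of "length P1 - 2" t] lens by simp
  moreover have "Suc (length P1 - 2) = length P1 - 1" using lens by simp
  ultimately show "fwd_flow E p f (t + (m-1)) (P1!(length P1 - 2)) d = F t * (1 - x t)"
    using fwd_s P1s unfolding m_def by (simp add: numeral_2_eq_2)
  have "fwd_flow E p f (t + (length P2 - 2)) (P2!(length P2 - 2)) (P2!Suc (length P2 - 2)) = fwd_flow E p f t (P2!0) (P2!1)"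
    using fwd_chain[OF tp', of "length P2 - 2" t] lens by simp
  moreover have "Suc (length P2 - 2) = length P2 - 1" using lens by simp
  ultimately show "fwd_flow E p f (t + (n-1)) (P2!(length P2 - 2)) d = F t * x t"
    using fwd_s P2s unfolding n_def by (simp add: numeral_2_eq_2)
qed

lemma rec_s:
  assumes t: "n - 1 \<le> t"
  shows "Ps (Suc t) = \<delta>*(Ps t + F t*(1 - Qs t/(Ps t + Qs t)) + B(t+1-m)*(1 - y(t+1-m)))"
    "Qs (Suc t) = \<delta>*(Qs t + F t*(Qs t/(Ps t + Qs t)) + B(t+1-n)*y(t+1-n))"
proof -
  have t1: "t = (t+1-m) + (m-1)" using t mn by simp
  have t2: "t = (t+1-n) + (n-1)" using t mn by simp
  have "bwd_flow E p b t s (P1!1) = B(t+1-m)*(1 - y(t+1-m))" using arr_s(1)[of "t+1-m"] t1 by simp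
  then show "Ps (Suc t) = \<delta>*(Ps t + F t*(1 - Qs t/(Ps t + Qs t)) + B(t+1-m)*(1 - y(t+1-m)))"
    unfolding Ps_def using pdyn[OF edge_first[OF tp]] fwd_s(1) unfolding x_def Ps_def Qs_def by simp
  have "bwd_flow E p b t s (P2!1) = B(t+1-n)*y(t+1-n)" using arr_s(2)[of "t+1-n"] t2 by simp
  then show "Qs (Suc t) = \<delta>*(Qs t + F t*(Qs t/(Ps t + Qs t)) + B(t+1-n)*y(t+1-n))"
    unfolding Qs_def using pdyn[OF edge_first[OF tp']] fwd_s(2) unfolding x_def Ps_def Qs_def by simp
qed

lemma rec_d:
  assumes t: "n - 1 \<le> t"
  shows "Pd (Suc t) = \<delta>*(Pd t + B t*(1 - Qd t/(Pd t + Qd t)) + F(t+1-m)*(1 - x(t+1-m)))"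
    "Qd (Suc t) = \<delta>*(Qd t + B t*(Qd t/(Pd t + Qd t)) + F(t+1-n)*x(t+1-n))"
proof -
  have t1: "t = (t+1-m) + (m-1)" using t mn by simp
  have t2: "t = (t+1-n) + (n-1)" using t mn by simp
  have "fwd_flow E p f t (P1!(length P1 - 2)) d = F(t+1-m)*(1 - x(t+1-m))" using arr_d(1)[of "t+1-m"] t1 by simp
  moreover have "Pd (Suc t) = \<delta>*(Pd t + fwd_flow E p f t (P1!(length P1 - 2)) d + bwd_flow E p b t (P1!(length P1 - 2)) d)"
    unfolding Pd_def by (rule pdyn[OF edge_last[OF tp]])
  ultimately have "Pd (Suc t) = \<delta>*(Pd t + B t*(1 - y t) + F(t+1-m)*(1 - x(t+1-m)))"
    using bwd_d(1)[of t] by (simp add: ac_simps)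
  then show "Pd (Suc t) = \<delta>*(Pd t + B t*(1 - Qd t/(Pd t + Qd t)) + F(t+1-m)*(1 - x(t+1-m)))"
    unfolding y_def .
  have "fwd_flow E p f t (P2!(length P2 - 2)) d = F(t+1-n)*x(t+1-n)" using arr_d(2)[of "t+1-n"] t2 by simp
  moreover have "Qd (Suc t) = \<delta>*(Qd t + fwd_flow E p f t (P2!(length P2 - 2)) d + bwd_flow E p b t (P2!(length P2 - 2)) d)"
    unfolding Qd_def by (rule pdyn[OF edge_last[OF tp']])
  ultimately have "Qd (Suc t) = \<delta>*(Qd t + B t*y t + F(t+1-n)*x(t+1-n))"
    using bwd_d(2)[of t] by (simp add: ac_simps)
  then show "Qd (Suc t) = \<delta>*(Qd t + B t*(Qd t/(Pd t + Qd t)) + F(t+1-n)*x(t+1-n))"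
    unfolding y_def .
qed

end


context PPD begin

lemma mono_le: "\<forall>t. g t \<le> g (Suc t) \<Longrightarrow> i \<le> j \<Longrightarrow> (g::nat\<Rightarrow>real) i \<le> g j"
  by (rule lift_Suc_mono_le) auto

lemma window_step:
  assumes Fm: "\<forall>t. F t \<le> F (Suc t)" and Bm: "\<forall>t. B t \<le> B (Suc t)"
  and UL: "\<forall>t \<ge> n-1. Ps t + Qs t + F t + B(t+1-n) \<le> U t \<and> Pd t + Qd t + B t + F(t+1-n) \<le> U t
             \<and> 0 < L t \<and> L t \<le> B(t+1-m) - B(t+1-n) \<and> L t \<le> F(t+1-m) - F(t+1-n)"
  shows "\<forall>t M. T + n \<le> t+1 \<longrightarrow> 0 \<le> M \<longrightarrow> M < 1 \<longrightarrow>
        (\<forall>j. t+1-n \<le> j \<longrightarrow> j \<le> t \<longrightarrow> x j \<le> M \<and> y j \<le> M) \<longrightarrow>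
        x(t+1) \<le> M/(1 + (L t/U t)*(1-M)) \<and> y(t+1) \<le> M/(1+(L t/U t)*(1-M))"
proof (intro allI impI)
  fix t M assume tt: "T + n \<le> t+1" and M: "0 \<le> M" "M < 1"
    and win: "\<forall>j. t+1-n \<le> j \<longrightarrow> j \<le> t \<longrightarrow> x j \<le> M \<and> y j \<le> M"
  have t: "n - 1 \<le> t" using tt by simp
  have ul: "Ps t + Qs t + F t + B(t+1-n) \<le> U t" "Pd t + Qd t + B t + F(t+1-n) \<le> U t"
     "0 < L t" "L t \<le> B(t+1-m) - B(t+1-n)" "L t \<le> F(t+1-m) - F(t+1-n)" using UL t by auto
  have w1: "x (t+1-m) \<le> M" "y (t+1-m) \<le> M" using win mn by auto
  have w2: "x (t+1-n) \<le> M" "y (t+1-n) \<le> M" using win mn by auto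
  have w0: "x t \<le> M" "y t \<le> M" using win mn by auto
  have BJ: "B(t+1-n) \<le> B(t+1-m)" using mono_le[OF Bm] mn by simp
  have FJ: "F(t+1-n) \<le> F(t+1-m)" using mono_le[OF Fm] mn by simp
  have xs: "x(t+1) \<le> M/(1 + (L t/U t)*(1-M))"
  proof -
    have "(\<delta>*(Qs t + F t*(Qs t/(Ps t+Qs t)) + B(t+1-n)*y(t+1-n))) /
          (\<delta>*(Ps t + F t*(1-Qs t/(Ps t+Qs t)) + B(t+1-m)*(1 - y(t+1-m))) + \<delta>*(Qs t + F t*(Qs t/(Ps t+Qs t)) + B(t+1-n)*y(t+1-n)))
          \<le> M / (1 + (L t/U t)*(1-M))"
    proof (rule hub_step)
      show "0 < \<delta>" using dpos by simp
      show "0 < Ps t" by (rule Ps_pos)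
      show "0 \<le> Qs t" by (rule Qs_nn)
      show "0 \<le> F t" by (rule F_nn)
      show "Qs t/(Ps t + Qs t) \<le> M" using w0 unfolding x_def by simp
      show "M \<le> 1" "0 \<le> M" using M by auto
      show "B(t+1-m)*(1-M) \<le> B(t+1-m)*(1 - y(t+1-m))" using w1 B_nn by (intro mult_left_mono) auto
      show "0 \<le> B(t+1-n)*y(t+1-n)" using B_nn y_range by simp
      show "B(t+1-n)*y(t+1-n) \<le> B(t+1-n)*M" using w2 B_nn by (intro mult_left_mono) auto
      show "0 \<le> B(t+1-n)" "B(t+1-n) \<le> B(t+1-m)" using B_nn BJ by auto
      show "Ps t + Qs t + F t + B(t+1-n) \<le> U t" "0 < L t" "L t \<le> B(t+1-m) - B(t+1-n)" using ul by auto
    qed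
    then show ?thesis unfolding x_def using rec_s[OF t] by simp
  qed
  have ys: "y(t+1) \<le> M/(1 + (L t/U t)*(1-M))"
  proof -
    have "(\<delta>*(Qd t + B t*(Qd t/(Pd t+Qd t)) + F(t+1-n)*x(t+1-n))) /
          (\<delta>*(Pd t + B t*(1-Qd t/(Pd t+Qd t)) + F(t+1-m)*(1 - x(t+1-m))) + \<delta>*(Qd t + B t*(Qd t/(Pd t+Qd t)) + F(t+1-n)*x(t+1-n)))
          \<le> M / (1 + (L t/U t)*(1-M))"
    proof (rule hub_step)
      show "0 < \<delta>" using dpos by simp
      show "0 < Pd t" by (rule Pd_pos)
      show "0 \<le> Qd t" by (rule Qd_nn)
      show "0 \<le> B t" by (rule B_nn)
      show "Qd t/(Pd t + Qd t) \<le> M" using w0 unfolding y_def by simp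
      show "M \<le> 1" "0 \<le> M" using M by auto
      show "F(t+1-m)*(1-M) \<le> F(t+1-m)*(1 - x(t+1-m))" using w1 F_nn by (intro mult_left_mono) auto
      show "0 \<le> F(t+1-n)*x(t+1-n)" using F_nn x_range by simp
      show "F(t+1-n)*x(t+1-n) \<le> F(t+1-n)*M" using w2 F_nn by (intro mult_left_mono) auto
      show "0 \<le> F(t+1-n)" "F(t+1-n) \<le> F(t+1-m)" using F_nn FJ by auto
      show "Pd t + Qd t + B t + F(t+1-n) \<le> U t" "0 < L t" "L t \<le> F(t+1-m) - F(t+1-n)" using ul by auto
    qed
    then show ?thesis unfolding y_def using rec_d[OF t] by simp
  qed
  show "x(t+1) \<le> M/(1 + (L t/U t)*(1-M)) \<and> y(t+1) \<le> M/(1+(L t/U t)*(1-M))" using xs ys by simp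
qed

lemma S_rec:
  assumes Fm: "\<forall>t. F t \<le> F (Suc t)" and Bm: "\<forall>t. B t \<le> B (Suc t)" and t: "n - 1 \<le> t"
  shows "Ps (Suc t) + Qs (Suc t) \<le> \<delta>*(Ps t + Qs t + F t + 2*B t)"
    "Pd (Suc t) + Qd (Suc t) \<le> \<delta>*(Pd t + Qd t + B t + 2*F t)"
proof -
  have B1: "B(t+1-m) \<le> B t" "B(t+1-n) \<le> B t" using mono_le[OF Bm] mn by auto
  have F1: "F(t+1-m) \<le> F t" "F(t+1-n) \<le> F t" using mono_le[OF Fm] mn by auto
  have "B(t+1-m)*(1 - y(t+1-m)) \<le> B(t+1-m)" using y_range[of "t+1-m"] B_nn by (intro mult_left_le) auto
  then have a1: "B(t+1-m)*(1 - y(t+1-m)) \<le> B t" using B1 by linarith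
  have "B(t+1-n)*y(t+1-n) \<le> B(t+1-n)" using y_range[of "t+1-n"] B_nn by (intro mult_left_le) auto
  then have a2: "B(t+1-n)*y(t+1-n) \<le> B t" using B1 by linarith
  have "F(t+1-m)*(1 - x(t+1-m)) \<le> F(t+1-m)" using x_range[of "t+1-m"] F_nn by (intro mult_left_le) auto
  then have c1: "F(t+1-m)*(1 - x(t+1-m)) \<le> F t" using F1 by linarith
  have "F(t+1-n)*x(t+1-n) \<le> F(t+1-n)" using x_range[of "t+1-n"] F_nn by (intro mult_left_le) auto
  then have c2: "F(t+1-n)*x(t+1-n) \<le> F t" using F1 by linarith
  have "Ps (Suc t) + Qs (Suc t) = \<delta>*(Ps t + Qs t + F t + B(t+1-m)*(1 - y(t+1-m)) + B(t+1-n)*y(t+1-n))"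
    using rec_s[OF t] by (simp add: algebra_simps)
  also have "\<dots> \<le> \<delta>*(Ps t + Qs t + F t + 2*B t)" using a1 a2 dpos by (intro mult_left_mono) auto
  finally show "Ps (Suc t) + Qs (Suc t) \<le> \<delta>*(Ps t + Qs t + F t + 2*B t)" .
  have "Pd (Suc t) + Qd (Suc t) = \<delta>*(Pd t + Qd t + B t + F(t+1-m)*(1 - x(t+1-m)) + F(t+1-n)*x(t+1-n))"
    using rec_d[OF t] by (simp add: algebra_simps)
  also have "\<dots> \<le> \<delta>*(Pd t + Qd t + B t + 2*F t)" using c1 c2 dpos by (intro mult_left_mono) auto
  finally show "Pd (Suc t) + Qd (Suc t) \<le> \<delta>*(Pd t + Qd t + B t + 2*F t)" .
qed

lemma nu_final:
  assumes "x t \<le> \<epsilon>" "y t \<le> \<epsilon>"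
  shows "\<forall>(u, v)\<in>path_edges P1. nu_f E p t u v \<ge> 1 - \<epsilon> \<and> nu_b E p t u v \<ge> 1 - \<epsilon>"
proof (clarify)
  fix u v assume e: "(u,v) \<in> path_edges P1"
  then obtain i where i: "Suc i < length P1" "u = P1!i" "v = P1!Suc i" using path_edges_iff by metis
  have eps: "0 \<le> \<epsilon>" using assms x_range[of t] by simp
  have pp: "p t u v > 0" using ppos e by simp
  have nf: "nu_f E p t u v \<ge> 1 - \<epsilon>"
  proof (cases "i = 0")
    case True
    then have "u = s" "v = P1!1" using i P1s by auto
    then have "nu_f E p t u v = Ps t/(Ps t + Qs t)" unfolding nu_f_def using out_s Ps_def Qs_def by simp
    also have "\<dots> = 1 - x t" unfolding x_def using Ps_pos[of t] Qs_nn[of t] by (simp add: field_simps)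
    finally show ?thesis using assms by simp
  next
    case False
    have "{z. (u, z) \<in> E} = {v}" using tpp_out_internal[OF tp, of i] False i by simp
    then have "nu_f E p t u v = 1" unfolding nu_f_def using pp by simp
    then show ?thesis using eps by simp
  qed
  have nb: "nu_b E p t u v \<ge> 1 - \<epsilon>"
  proof (cases "Suc i = length P1 - 1")
    case True
    then have "i = length P1 - 2" by linarith
    then have "v = d" "u = P1!(length P1 - 2)" using i P1s True by auto
    then have "nu_b E p t u v = Pd t/(Pd t + Qd t)" unfolding nu_b_def using in_d Pd_def Qd_def by simp
    also have "\<dots> = 1 - y t" unfolding y_def using Pd_pos[of t] Qd_nn[of t] by (simp add: field_simps)
    finally show ?thesis using assms by simp
  next
    case False
    then have "{z. (z, v) \<in> E} = {u}" using tpp_in_internal[OF tp, of "Suc i"] i by simp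
    then have "nu_b E p t u v = 1" unfolding nu_b_def using pp by simp
    then show ?thesis using eps by simp
  qed
  show "1 - \<epsilon> \<le> nu_f E p t u v \<and> 1 - \<epsilon> \<le> nu_b E p t u v" using nf nb by simp
qed

end


context PPD begin

lemma init_max: "\<exists>M0. 0 \<le> M0 \<and> M0 < 1 \<and> (\<forall>t. T \<le> t \<longrightarrow> t < T+n \<longrightarrow> x t \<le> M0 \<and> y t \<le> M0)"
proof -
  define A where "A = x ` {T..<T+n} \<union> y ` {T..<T+n}"
  have fa: "finite A" "A \<noteq> {}" unfolding A_def using mn by auto
  define M0 where "M0 = Max A"
  have "M0 \<in> A" unfolding M0_def using fa by simp
  then have "0 \<le> M0 \<and> M0 < 1" unfolding A_def using x_range y_range by auto
  moreover have "x t \<le> M0 \<and> y t \<le> M0" if "T \<le> t" "t < T+n" for t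
    unfolding M0_def using fa that unfolding A_def by auto
  ultimately show ?thesis by blast
qed

lemma part1:
  assumes lam: "lam > 1" and Fe: "\<forall>t. F t = lam^t * F 0" and Be: "\<forall>t. B t = lam^t * B 0"
    and F0: "F 0 > 0" and B0: "B 0 > 0"
  shows "\<exists>C1 > 0. \<exists>C2 > 0. \<forall>\<epsilon>::real. 0 < \<epsilon> \<and> \<epsilon> < 1 \<longrightarrow>
         (\<forall>t::nat. real t \<ge> C1 + C2 * ln (1 / \<epsilon>) \<longrightarrow>
            (\<forall>(u, v)\<in>path_edges P1. nu_f E p t u v \<ge> 1 - \<epsilon> \<and> nu_b E p t u v \<ge> 1 - \<epsilon>))"
proof -
  have lp: "lam^t > 0" for t using lam by simp
  have gen: "(a/D)*(X*D) = a*X*(D/D)" for a X D :: real by simp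
  have lmono: "lam^i \<le> lam^j" if "i \<le> j" for i j using lam that by (simp add: power_increasing)
  have Fm: "\<forall>t. F t \<le> F (Suc t)"
  proof
    fix t have "lam^t * F 0 \<le> lam^Suc t * F 0" using F0 lmono[of t "Suc t"] by (intro mult_right_mono) auto
    then show "F t \<le> F (Suc t)" using Fe by metis
  qed
  have Bm: "\<forall>t. B t \<le> B (Suc t)"
  proof
    fix t have "lam^t * B 0 \<le> lam^Suc t * B 0" using B0 lmono[of t "Suc t"] by (intro mult_right_mono) auto
    then show "B t \<le> B (Suc t)" using Be by metis
  qed
  define T where "T = n - 1"
  have FB: "F t = lam^t * F 0" "B t = lam^t * B 0" for t using Fe Be by blast+
  have "\<forall>t\<ge>T. (Ps (t+1) + Qs (t+1)) \<le> \<delta>*((Ps t + Qs t) + (F 0 + 2*B 0)*lam^t)"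
  proof (intro allI impI)
    fix t assume "T \<le> t"
    then have "Ps (Suc t) + Qs (Suc t) \<le> \<delta>*(Ps t + Qs t + F t + 2*B t)" using S_rec(1)[OF Fm Bm] unfolding T_def by simp
    moreover have "F t + 2*B t = (F 0 + 2*B 0)*lam^t" unfolding FB(1)[of t] FB(2)[of t] by (simp add: algebra_simps)
    ultimately show "(Ps (t+1) + Qs (t+1)) \<le> \<delta>*((Ps t + Qs t) + (F 0 + 2*B 0)*lam^t)" by (simp add: add.assoc)
  qed
  then obtain Ks where Ks: "Ks > 0" "\<forall>t\<ge>T. Ps t + Qs t \<le> Ks*lam^t"
    using exp_bound[of \<delta> lam "F 0 + 2*B 0" T "\<lambda>t. Ps t + Qs t"] dpos lam F0 B0 by auto
  have "\<forall>t\<ge>T. (Pd (t+1) + Qd (t+1)) \<le> \<delta>*((Pd t + Qd t) + (B 0 + 2*F 0)*lam^t)"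
  proof (intro allI impI)
    fix t assume "T \<le> t"
    then have "Pd (Suc t) + Qd (Suc t) \<le> \<delta>*(Pd t + Qd t + B t + 2*F t)" using S_rec(2)[OF Fm Bm] unfolding T_def by simp
    moreover have "B t + 2*F t = (B 0 + 2*F 0)*lam^t" unfolding FB(1)[of t] FB(2)[of t] by (simp add: algebra_simps)
    ultimately show "(Pd (t+1) + Qd (t+1)) \<le> \<delta>*((Pd t + Qd t) + (B 0 + 2*F 0)*lam^t)" by (simp add: add.assoc)
  qed
  then obtain Kd where Kd: "Kd > 0" "\<forall>t\<ge>T. Pd t + Qd t \<le> Kd*lam^t"
    using exp_bound[of \<delta> lam "B 0 + 2*F 0" T "\<lambda>t. Pd t + Qd t"] dpos lam F0 B0 by auto
  define Uc where "Uc = Ks + Kd + F 0 + B 0"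
  define Lc where "Lc = min (F 0) (B 0) * (lam - 1) / lam^(n-1)"
  have Uc: "Uc > 0" unfolding Uc_def using Ks Kd F0 B0 by simp
  have Lc: "Lc > 0" unfolding Lc_def using F0 B0 lam by simp
  have UL: "\<forall>t \<ge> n-1. Ps t + Qs t + F t + B(t+1-n) \<le> Uc*lam^t \<and> Pd t + Qd t + B t + F(t+1-n) \<le> Uc*lam^t
             \<and> 0 < Lc*lam^t \<and> Lc*lam^t \<le> B(t+1-m) - B(t+1-n) \<and> Lc*lam^t \<le> F(t+1-m) - F(t+1-n)"
  proof (intro allI impI conjI)
    fix t assume t: "n - 1 \<le> t"
    have tn: "t+1-n \<le> t" using mn by simp
    have Bt: "B(t+1-n) \<le> B t" "F(t+1-n) \<le> F t" using mono_le[OF Bm tn] mono_le[OF Fm tn] by auto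
    have "Ps t + Qs t \<le> Ks*lam^t" "Pd t + Qd t \<le> Kd*lam^t" using Ks Kd t unfolding T_def by auto
    moreover have "Kd*lam^t \<ge> 0" "Ks*lam^t \<ge> 0" using Ks Kd lp[of t] by auto
    ultimately show "Ps t + Qs t + F t + B(t+1-n) \<le> Uc*lam^t" "Pd t + Qd t + B t + F(t+1-n) \<le> Uc*lam^t"
      using Bt unfolding Uc_def FB(1)[of t] FB(2)[of t] by (simp_all add: algebra_simps)
    show "0 < Lc*lam^t" using Lc lp by simp
    have ex: "(t+1-n) + (n-1) = t" using t mn by simp
    have key: "Lc*lam^t \<le> min (F 0) (B 0) * (lam^(t+1-m) - lam^(t+1-n))"
    proof -
      have "lam^((t+1-n) + (n-1)) = lam^(t+1-n) * lam^(n-1)" by (rule power_add)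
      then have "lam^t = lam^(t+1-n) * lam^(n-1)" unfolding ex .
      then have "Lc*lam^t = (min (F 0) (B 0) * (lam-1) / lam^(n-1)) * (lam^(t+1-n) * lam^(n-1))"
        unfolding Lc_def by simp
      also have "\<dots> = min (F 0) (B 0) * (lam-1) * lam^(t+1-n) * (lam^(n-1) / lam^(n-1))"
        by (rule gen)
      also have "\<dots> = min (F 0) (B 0) * (lam-1) * lam^(t+1-n)" using lam by simp
      also have "\<dots> = min (F 0) (B 0) * (lam^(Suc (t+1-n)) - lam^(t+1-n))" by (simp add: algebra_simps)
      also have "\<dots> \<le> min (F 0) (B 0) * (lam^(t+1-m) - lam^(t+1-n))"
        using lmono[of "Suc (t+1-n)" "t+1-m"] mn t F0 B0 by (intro mult_left_mono) auto
      finally show ?thesis .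
    qed
    have "min (F 0) (B 0) * (lam^(t+1-m) - lam^(t+1-n)) \<le> B 0 * (lam^(t+1-m) - lam^(t+1-n))"
      using lmono[of "t+1-n" "t+1-m"] mn by (intro mult_right_mono) auto
    then show "Lc*lam^t \<le> B(t+1-m) - B(t+1-n)" using key unfolding FB(2)[of "t+1-m"] FB(2)[of "t+1-n"] by (simp add: algebra_simps)
    have "min (F 0) (B 0) * (lam^(t+1-m) - lam^(t+1-n)) \<le> F 0 * (lam^(t+1-m) - lam^(t+1-n))"
      using lmono[of "t+1-n" "t+1-m"] mn by (intro mult_right_mono) auto
    then show "Lc*lam^t \<le> F(t+1-m) - F(t+1-n)" using key unfolding FB(1)[of "t+1-m"] FB(1)[of "t+1-n"] by (simp add: algebra_simps)
  qed
  have hh: "(Lc*lam^t)/(Uc*lam^t) = Lc/Uc" for t using lam by simp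
  obtain M0 where M0: "0 \<le> M0" "M0 < 1" "\<forall>t. T \<le> t \<longrightarrow> t < T+n \<longrightarrow> x t \<le> M0 \<and> y t \<le> M0"
    using init_max by blast
  have step: "\<forall>t M. T + n \<le> t+1 \<longrightarrow> 0 \<le> M \<longrightarrow> M < 1 \<longrightarrow>
        (\<forall>j. t+1-n \<le> j \<longrightarrow> j \<le> t \<longrightarrow> x j \<le> M \<and> y j \<le> M) \<longrightarrow>
        x(t+1) \<le> M/(1 + (\<lambda>t. Lc/Uc) t*(1-M)) \<and> y(t+1) \<le> M/(1+(\<lambda>t. Lc/Uc) t*(1-M))"
    using window_step[OF Fm Bm UL, of T] unfolding hh by simp
  obtain r where r: "0 < r" "r < 1" "\<forall>t\<ge>T. x t \<le> r^(t-(T+n)) \<and> y t \<le> r^(t-(T+n))"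
    using exp_decay[of n "Lc/Uc" "\<lambda>t. Lc/Uc" M0 T x y, OF _ _ _ M0(1,2) M0(3) step] mn Lc Uc by auto
  have lr: "ln r < 0" using r by simp
  define C1 where "C1 = real (T+n) + 1"
  define C2 where "C2 = - 1/ln r"
  have C2: "C2 > 0" unfolding C2_def using lr by simp
  have "\<forall>\<epsilon>::real. 0 < \<epsilon> \<and> \<epsilon> < 1 \<longrightarrow>
         (\<forall>t::nat. real t \<ge> C1 + C2 * ln (1 / \<epsilon>) \<longrightarrow>
            (\<forall>(u, v)\<in>path_edges P1. nu_f E p t u v \<ge> 1 - \<epsilon> \<and> nu_b E p t u v \<ge> 1 - \<epsilon>))"
  proof (intro allI impI)
    fix \<epsilon> :: real and t :: nat
    assume e: "0 < \<epsilon> \<and> \<epsilon> < 1" and tt: "real t \<ge> C1 + C2 * ln (1 / \<epsilon>)"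
    have le0: "ln (1/\<epsilon>) \<ge> 0" using e by simp
    then have "C2 * ln (1/\<epsilon>) \<ge> 0" using C2 by simp
    then have tT: "T + n \<le> t" using tt unfolding C1_def by linarith
    define k where "k = t - (T+n)"
    have rk: "real k \<ge> C2 * ln (1/\<epsilon>)" unfolding k_def using tT tt unfolding C1_def by (simp add: of_nat_diff)
    have "real k * ln r \<le> ln \<epsilon>"
    proof -
      have "real k * (- ln r) \<ge> C2 * ln (1/\<epsilon>) * (- ln r)" using rk lr by (intro mult_right_mono) auto
      also have "C2 * ln (1/\<epsilon>) * (- ln r) = - ln \<epsilon>" unfolding C2_def using lr e by (simp add: ln_div field_simps)
      finally show ?thesis by simp
    qed
    then have "ln (r^k) \<le> ln \<epsilon>" by (simp add: ln_realpow)
    then have rke: "r^k \<le> \<epsilon>" using r e by simp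
    have "x t \<le> r^k" "y t \<le> r^k" using r(3) tT unfolding k_def by auto
    then have "x t \<le> \<epsilon>" "y t \<le> \<epsilon>" using rke by linarith+
    then show "\<forall>(u, v)\<in>path_edges P1. nu_f E p t u v \<ge> 1 - \<epsilon> \<and> nu_b E p t u v \<ge> 1 - \<epsilon>"
      by (rule nu_final)
  qed
  moreover have "C1 > 0" unfolding C1_def by simp
  ultimately show ?thesis using C2 by blast
qed

end


definition Kf :: "real \<Rightarrow> nat \<Rightarrow> real" where
  "Kf \<delta> k = (if 0 < \<delta> \<and> \<delta> < 1 \<and> 0 < k then 12 * real k / (1 - \<delta>) else 1)"

lemma Kf_pos: "Kf \<delta> k > 0" unfolding Kf_def by auto

context PPD begin

lemma part2:
  assumes al: "\<alpha> > 0" and Fe: "\<forall>t. F t = F 0 + \<alpha> * real t" and Be: "\<forall>t. B t = B 0 + \<alpha> * real t"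
    and F0: "F 0 > 0" and B0: "B 0 > 0"
  shows "\<exists>C > 0. \<forall>\<epsilon>::real. 0 < \<epsilon> \<and> \<epsilon> < 1 \<longrightarrow>
         (\<forall>t::nat. real t \<ge> C * (1 / \<epsilon>) powr Kf \<delta> (path_len P2) \<longrightarrow>
            (\<forall>(u, v)\<in>path_edges P1. nu_f E p t u v \<ge> 1 - \<epsilon> \<and> nu_b E p t u v \<ge> 1 - \<epsilon>))"
proof -
  have FB: "F t = F 0 + \<alpha> * real t" "B t = B 0 + \<alpha> * real t" for t using Fe Be by blast+
  have Fm: "\<forall>t. F t \<le> F (Suc t)"
  proof
    fix t show "F t \<le> F (Suc t)" unfolding FB(1)[of t] FB(1)[of "Suc t"] using al by simp
  qed
  have Bm: "\<forall>t. B t \<le> B (Suc t)"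
  proof
    fix t show "B t \<le> B (Suc t)" unfolding FB(2)[of t] FB(2)[of "Suc t"] using al by simp
  qed
  define T where "T = n - 1"
  have d: "0 < \<delta>" "\<delta> < 1" using dpos by auto
  have "\<forall>t\<ge>T. (Ps (t+1) + Qs (t+1)) \<le> \<delta>*((Ps t + Qs t) + (3*\<alpha>)*t + (F 0 + 2*B 0))"
  proof (intro allI impI)
    fix t assume "T \<le> t"
    then have "Ps (Suc t) + Qs (Suc t) \<le> \<delta>*(Ps t + Qs t + F t + 2*B t)" using S_rec(1)[OF Fm Bm] unfolding T_def by simp
    moreover have "F t + 2*B t = (3*\<alpha>)*t + (F 0 + 2*B 0)" unfolding FB(1)[of t] FB(2)[of t] by (simp add: algebra_simps)
    ultimately show "(Ps (t+1) + Qs (t+1)) \<le> \<delta>*((Ps t + Qs t) + (3*\<alpha>)*t + (F 0 + 2*B 0))" by (simp add: add.assoc)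
  qed
  then obtain Ks where Ks: "\<forall>t\<ge>T. Ps t + Qs t \<le> 3*\<alpha>*\<delta>/(1-\<delta>)*t + Ks"
    using lin_bound[of \<delta> "3*\<alpha>" "F 0 + 2*B 0" T "\<lambda>t. Ps t + Qs t"] d al F0 B0 by auto
  have "\<forall>t\<ge>T. (Pd (t+1) + Qd (t+1)) \<le> \<delta>*((Pd t + Qd t) + (3*\<alpha>)*t + (B 0 + 2*F 0))"
  proof (intro allI impI)
    fix t assume "T \<le> t"
    then have "Pd (Suc t) + Qd (Suc t) \<le> \<delta>*(Pd t + Qd t + B t + 2*F t)" using S_rec(2)[OF Fm Bm] unfolding T_def by simp
    moreover have "B t + 2*F t = (3*\<alpha>)*t + (B 0 + 2*F 0)" unfolding FB(1)[of t] FB(2)[of t] by (simp add: algebra_simps)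
    ultimately show "(Pd (t+1) + Qd (t+1)) \<le> \<delta>*((Pd t + Qd t) + (3*\<alpha>)*t + (B 0 + 2*F 0))" by (simp add: add.assoc)
  qed
  then obtain Kd where Kd: "\<forall>t\<ge>T. Pd t + Qd t \<le> 3*\<alpha>*\<delta>/(1-\<delta>)*t + Kd"
    using lin_bound[of \<delta> "3*\<alpha>" "B 0 + 2*F 0" T "\<lambda>t. Pd t + Qd t"] d al F0 B0 by auto
  define \<kappa> where "\<kappa> = (1-\<delta>)/3"
  define H where "H = 2*real n + (\<bar>Ks\<bar> + \<bar>Kd\<bar> + F 0 + B 0)/\<alpha>"
  define cc where "cc = 3*\<alpha>/(1-\<delta>)"
  have kap: "0 < \<kappa>" "\<kappa> \<le> 1" unfolding \<kappa>_def using d by auto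
  have H: "H \<ge> 2*n" unfolding H_def using al F0 B0 by simp
  have cc: "cc > 0" unfolding cc_def using al d by simp
  have HK: "\<bar>Ks\<bar> + \<bar>Kd\<bar> + F 0 + B 0 \<le> cc*H"
  proof -
    have "\<bar>Ks\<bar> + \<bar>Kd\<bar> + F 0 + B 0 = \<alpha> * ((\<bar>Ks\<bar> + \<bar>Kd\<bar> + F 0 + B 0)/\<alpha>)" using al by simp
    also have "\<dots> \<le> \<alpha> * H" unfolding H_def using al by (intro mult_left_mono) auto
    also have "\<dots> \<le> cc * H"
    proof (rule mult_right_mono)
      have "\<alpha> * (1-\<delta>) \<le> 3*\<alpha>" using al d by simp
      then show "\<alpha> \<le> cc" unfolding cc_def using d by (simp add: le_divide_eq)
      show "0 \<le> H" using H by simp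
    qed
    finally show ?thesis .
  qed
  have cct: "3*\<alpha>*\<delta>/(1-\<delta>) + 2*\<alpha> \<le> cc"
  proof -
    have "cc - 3*\<alpha>*\<delta>/(1-\<delta>) = (3*\<alpha>*(1-\<delta>))/(1-\<delta>)" unfolding cc_def
      by (simp add: diff_divide_distrib[symmetric] algebra_simps)
    also have "\<dots> = 3*\<alpha>" using d by simp
    finally have "cc - 3*\<alpha>*\<delta>/(1-\<delta>) = 3*\<alpha>" .
    then show ?thesis using al by simp
  qed
  define U where "U t = cc*(real t + H)" for t :: nat
  have UL: "\<forall>t \<ge> n-1. Ps t + Qs t + F t + B(t+1-n) \<le> U t \<and> Pd t + Qd t + B t + F(t+1-n) \<le> U t
             \<and> 0 < (\<lambda>t. \<alpha>) t \<and> (\<lambda>t. \<alpha>) t \<le> B(t+1-m) - B(t+1-n) \<and> (\<lambda>t. \<alpha>) t \<le> F(t+1-m) - F(t+1-n)"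
  proof (intro allI impI conjI)
    fix t assume t: "n - 1 \<le> t"
    have tn: "t+1-n \<le> t" using mn by simp
    have Bt: "B(t+1-n) \<le> B t" "F(t+1-n) \<le> F t" using mono_le[OF Bm tn] mono_le[OF Fm tn] by auto
    have ct: "(3*\<alpha>*\<delta>/(1-\<delta>) + 2*\<alpha>) * t \<le> cc * t" using cct by (intro mult_right_mono) auto
    have Ut: "U t = cc * t + cc * H" unfolding U_def by (simp add: algebra_simps)
    have s1: "Ps t + Qs t \<le> 3*\<alpha>*\<delta>/(1-\<delta>)*t + Ks" using Ks t unfolding T_def by auto
    have s2: "Pd t + Qd t \<le> 3*\<alpha>*\<delta>/(1-\<delta>)*t + Kd" using Kd t unfolding T_def by auto
    have e1: "F t + B t = 2*\<alpha>*t + F 0 + B 0" unfolding FB(1)[of t] FB(2)[of t] by (simp add: algebra_simps)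
    have "Ps t + Qs t + F t + B(t+1-n) \<le> 3*\<alpha>*\<delta>/(1-\<delta>)*t + Ks + 2*\<alpha>*t + F 0 + B 0" using s1 Bt e1 by linarith
    also have "\<dots> = (3*\<alpha>*\<delta>/(1-\<delta>) + 2*\<alpha>) * t + (Ks + F 0 + B 0)" by (simp add: algebra_simps)
    also have "\<dots> \<le> U t" using ct HK Ut by linarith
    finally show "Ps t + Qs t + F t + B(t+1-n) \<le> U t" .
    have "Pd t + Qd t + B t + F(t+1-n) \<le> 3*\<alpha>*\<delta>/(1-\<delta>)*t + Kd + 2*\<alpha>*t + F 0 + B 0" using s2 Bt e1 by linarith
    also have "\<dots> = (3*\<alpha>*\<delta>/(1-\<delta>) + 2*\<alpha>) * t + (Kd + F 0 + B 0)" by (simp add: algebra_simps)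
    also have "\<dots> \<le> U t" using ct HK Ut by linarith
    finally show "Pd t + Qd t + B t + F(t+1-n) \<le> U t" .
    show "0 < (\<lambda>t. \<alpha>) t" using al by simp
    have dd: "real (t+1-m) - real (t+1-n) \<ge> 1" using t mn by (simp add: of_nat_diff)
    have "\<alpha> * 1 \<le> \<alpha> * (real (t+1-m) - real (t+1-n))" using dd al by (intro mult_left_mono) auto
    then show "(\<lambda>t. \<alpha>) t \<le> B(t+1-m) - B(t+1-n)" "(\<lambda>t. \<alpha>) t \<le> F(t+1-m) - F(t+1-n)"
      unfolding FB(1)[of "t+1-m"] FB(1)[of "t+1-n"] FB(2)[of "t+1-m"] FB(2)[of "t+1-n"] by (simp_all add: algebra_simps)
  qed
  have hh: "\<alpha> / U t = \<kappa>/(real t + H)" for t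
  proof -
    have "real t + H > 0" using H mn by simp
    moreover have "1 - \<delta> \<noteq> 0" "\<alpha> \<noteq> 0" using d al by auto
    ultimately have X: "real t + H \<noteq> 0" "1 - \<delta> \<noteq> 0" "\<alpha> \<noteq> 0" by auto
    have "\<alpha> / U t = \<alpha> / (3*\<alpha>*(real t + H)/(1-\<delta>))" unfolding U_def cc_def by simp
    also have "\<dots> = (\<alpha>*(1-\<delta>)) / (\<alpha>*(3*(real t + H)))" by (simp add: ac_simps)
    also have "\<dots> = (1-\<delta>) / (3*(real t + H))" using X by simp
    also have "\<dots> = \<kappa>/(real t + H)" unfolding \<kappa>_def by simp
    finally show ?thesis .
  qed
  have stepT: "\<forall>t M. T' + n \<le> t+1 \<longrightarrow> 0 \<le> M \<longrightarrow> M < 1 \<longrightarrow>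
        (\<forall>j. t+1-n \<le> j \<longrightarrow> j \<le> t \<longrightarrow> x j \<le> M \<and> y j \<le> M) \<longrightarrow>
        x(t+1) \<le> M/(1 + (\<lambda>t. \<alpha>/U t) t*(1-M)) \<and> y(t+1) \<le> M/(1+(\<lambda>t. \<alpha>/U t) t*(1-M))" for T'
    using window_step[OF Fm Bm UL, of T'] by simp
  have hge: "\<forall>t. (\<lambda>t. \<alpha>/U t) t \<ge> \<kappa>/(real t + H)" using hh by simp
  have n1: "n \<ge> 1" using mn by simp
  obtain M0 where M0: "0 \<le> M0" "M0 < 1" "\<forall>t. T \<le> t \<longrightarrow> t < T+n \<longrightarrow> x t \<le> M0 \<and> y t \<le> M0"
    using init_max by blast
  define c1 where "c1 = \<kappa>*(1-M0)/(2*n)"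
  define a1 where "a1 = real T + n + H"
  have st1: "\<forall>t\<ge>T. x t \<le> M0 * min 1 ((a1/(t+H)) powr c1) \<and> y t \<le> M0 * min 1 ((a1/(t+H)) powr c1)"
    using pow_decay[OF n1 kap H hge M0(1,2) M0(3) stepT] unfolding c1_def a1_def by simp
  have c1: "c1 > 0" unfolding c1_def using kap M0 mn by simp
  have a1: "a1 > 0" unfolding a1_def using H mn by simp
  define T1 where "T1 = T + nat \<lceil>a1 * 2 powr (1/c1)\<rceil>"
  have half: "x t \<le> 1/2 \<and> y t \<le> 1/2" if t: "T1 \<le> t" for t
  proof -
    have tH: "real t + H > 0" using H mn by simp
    have "a1 * 2 powr (1/c1) \<le> real t + H"
    proof -
      have i1: "a1 * 2 powr (1/c1) \<le> real (nat \<lceil>a1 * 2 powr (1/c1)\<rceil>)" by linarith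
      have "nat \<lceil>a1 * 2 powr (1/c1)\<rceil> \<le> T + nat \<lceil>a1 * 2 powr (1/c1)\<rceil>" by (rule le_add2)
      then have "nat \<lceil>a1 * 2 powr (1/c1)\<rceil> \<le> t" using t unfolding T1_def by (rule le_trans)
      then have i2: "real (nat \<lceil>a1 * 2 powr (1/c1)\<rceil>) \<le> real t" by (rule of_nat_mono)
      show ?thesis using i1 i2 H by linarith
    qed
    then have "a1/(t+H) \<le> 1 / 2 powr (1/c1)" using tH a1 by (simp add: field_simps)
    then have "(a1/(t+H)) powr c1 \<le> (1 / 2 powr (1/c1)) powr c1" using c1 a1 tH by (intro powr_mono2) auto
    also have "\<dots> = 1/2" using c1 by (simp add: powr_divide powr_powr)
    finally have pw: "(a1/(t+H)) powr c1 \<le> 1/2" .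
    have Tt: "T \<le> t" using t unfolding T1_def by simp
    have "M0 * min 1 ((a1/(t+H)) powr c1) \<le> 1 * (1/2)"
      using M0 pw by (intro mult_mono) auto
    then show ?thesis using st1 Tt by fastforce
  qed
  define c2 where "c2 = \<kappa>*(1-1/2)/(2*real n)"
  define a2 where "a2 = real T1 + n + H"
  have init2: "\<forall>t. T1 \<le> t \<longrightarrow> t < T1+n \<longrightarrow> x t \<le> 1/2 \<and> y t \<le> 1/2" using half by blast
  have st2: "\<forall>t\<ge>T1. x t \<le> 1/2 * min 1 ((a2/(t+H)) powr c2) \<and> y t \<le> 1/2 * min 1 ((a2/(t+H)) powr c2)"
    using pow_decay[OF n1 kap H hge _ _ init2 stepT] unfolding c2_def a2_def by simp
  have Kn: "Kf \<delta> (path_len P2) = 12 * real n / (1 - \<delta>)"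
    unfolding Kf_def path_len_def n_def[symmetric] using d mn by simp
  have Kc: "Kf \<delta> (path_len P2) * c2 = 1" unfolding Kn c2_def \<kappa>_def using d mn by (simp add: field_simps)
  have a2: "a2 > 0" unfolding a2_def using H mn by simp
  have "\<forall>\<epsilon>::real. 0 < \<epsilon> \<and> \<epsilon> < 1 \<longrightarrow>
         (\<forall>t::nat. real t \<ge> a2 * (1 / \<epsilon>) powr Kf \<delta> (path_len P2) \<longrightarrow>
            (\<forall>(u, v)\<in>path_edges P1. nu_f E p t u v \<ge> 1 - \<epsilon> \<and> nu_b E p t u v \<ge> 1 - \<epsilon>))"
  proof (intro allI impI)
    fix \<epsilon> :: real and t :: nat
    let ?K = "Kf \<delta> (path_len P2)"
    assume e: "0 < \<epsilon> \<and> \<epsilon> < 1" and tt: "real t \<ge> a2 * (1 / \<epsilon>) powr ?K"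
    have K0: "?K > 0" by (rule Kf_pos)
    have p1: "(1/\<epsilon>) powr ?K \<ge> 1" using e K0 by (intro ge_one_powr_ge_zero) auto
    have ta: "real t \<ge> a2" using tt p1 a2 by (smt (verit) mult_left_le_one_le mult_le_cancel_left1)
    then have tT1: "T1 \<le> t" unfolding a2_def using H by simp
    have tp: "real t > 0" using ta a2 by simp
    have pe: "(1/\<epsilon>) powr ?K = 1 / \<epsilon> powr ?K" using e by (simp add: powr_divide)
    have epk: "\<epsilon> powr ?K > 0" using e by simp
    have "a2/(t+H) \<le> a2/t" using a2 tp H mn by (intro divide_left_mono) auto
    also have "\<dots> \<le> \<epsilon> powr ?K"
    proof -
      have "a2 \<le> real t * \<epsilon> powr ?K" using tt pe epk by (simp add: field_simps)
      then show ?thesis using tp by (simp add: divide_le_eq mult.commute)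
    qed
    finally have q: "a2/(t+H) \<le> \<epsilon> powr ?K" .
    have "(a2/(t+H)) powr c2 \<le> (\<epsilon> powr ?K) powr c2"
      using q a2 tp H mn unfolding c2_def using kap by (intro powr_mono2) auto
    also have "\<dots> = \<epsilon>" using Kc e by (simp add: powr_powr)
    finally have "(a2/(t+H)) powr c2 \<le> \<epsilon>" .
    then have "1/2 * min 1 ((a2/(t+H)) powr c2) \<le> \<epsilon>" using e by linarith
    then have "x t \<le> \<epsilon>" "y t \<le> \<epsilon>" using st2 tT1 by fastforce+
    then show "\<forall>(u, v)\<in>path_edges P1. nu_f E p t u v \<ge> 1 - \<epsilon> \<and> nu_b E p t u v \<ge> 1 - \<epsilon>"
      by (rule nu_final)
  qed
  then show ?thesis using a2 by blast
qed

end


theorem theorem2: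
  shows
  "(\<forall>(V :: nat set) E s d P1 P2 l \<delta> p f b (lam::real).
      pp_setup V E s d P1 P2 l \<delta> p f b \<and> lam > 1 \<and>
      (\<forall>t. f t s = lam ^ t * f 0 s \<and> b t d = lam ^ t * b 0 d) \<longrightarrow>
      (\<exists>C1 > 0. \<exists>C2 > 0. \<forall>\<epsilon>::real. 0 < \<epsilon> \<and> \<epsilon> < 1 \<longrightarrow>
         (\<forall>t::nat. real t \<ge> C1 + C2 * ln (1 / \<epsilon>) \<longrightarrow>
            (\<forall>(u, v)\<in>path_edges P1.
               nu_f E p t u v \<ge> 1 - \<epsilon> \<and> nu_b E p t u v \<ge> 1 - \<epsilon>)))) \<and>
   (\<exists>K :: real \<Rightarrow> nat \<Rightarrow> real. (\<forall>\<delta> n. K \<delta> n > 0) \<and>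
     (\<forall>(V :: nat set) E s d P1 P2 l \<delta> p f b (\<alpha>::real).
      pp_setup V E s d P1 P2 l \<delta> p f b \<and> \<alpha> > 0 \<and>
      (\<forall>t. f t s = f 0 s + \<alpha> * real t \<and> b t d = b 0 d + \<alpha> * real t) \<longrightarrow>
      (\<exists>C > 0. \<forall>\<epsilon>::real. 0 < \<epsilon> \<and> \<epsilon> < 1 \<longrightarrow>
         (\<forall>t::nat. real t \<ge> C * (1 / \<epsilon>) powr K \<delta> (path_len P2) \<longrightarrow>
            (\<forall>(u, v)\<in>path_edges P1.
               nu_f E p t u v \<ge> 1 - \<epsilon> \<and> nu_b E p t u v \<ge> 1 - \<epsilon>)))))"
proof (rule conjI)
  show "\<forall>(V :: nat set) E s d P1 P2 l \<delta> p f b (lam::real).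
      pp_setup V E s d P1 P2 l \<delta> p f b \<and> lam > 1 \<and>
      (\<forall>t. f t s = lam ^ t * f 0 s \<and> b t d = lam ^ t * b 0 d) \<longrightarrow>
      (\<exists>C1 > 0. \<exists>C2 > 0. \<forall>\<epsilon>::real. 0 < \<epsilon> \<and> \<epsilon> < 1 \<longrightarrow>
         (\<forall>t::nat. real t \<ge> C1 + C2 * ln (1 / \<epsilon>) \<longrightarrow>
            (\<forall>(u, v)\<in>path_edges P1.
               nu_f E p t u v \<ge> 1 - \<epsilon> \<and> nu_b E p t u v \<ge> 1 - \<epsilon>)))"
  proof (intro allI impI)
    fix V :: "nat set" and E s d P1 P2 l \<delta> p f b and lam :: real
    assume h: "pp_setup V E s d P1 P2 l \<delta> p f b \<and> lam > 1 \<and>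
      (\<forall>t. f t s = lam ^ t * f 0 s \<and> b t d = lam ^ t * b 0 d)"
    have pp: "pp_setup V E s d P1 P2 l \<delta> p f b" and lam: "lam > 1"
      and fe: "\<forall>t. f t s = lam ^ t * f 0 s" and be: "\<forall>t. b t d = lam ^ t * b 0 d" using h by blast+
    have f0: "f 0 s > 0" "b 0 d > 0" using pp unfolding pp_setup_def by auto
    have Fnn: "\<forall>t. f t s \<ge> 0"
    proof
      fix t have "lam^t * f 0 s \<ge> 0" using lam f0 by simp
      then show "f t s \<ge> 0" using fe by (metis (no_types))
    qed
    have Bnn: "\<forall>t. b t d \<ge> 0"
    proof
      fix t have "lam^t * b 0 d \<ge> 0" using lam f0 by simp
      then show "b t d \<ge> 0" using be by (metis (no_types))
    qed
    interpret PPD V E s d P1 P2 l \<delta> p f b using pp Fnn Bnn by unfold_locales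
    show "\<exists>C1 > 0. \<exists>C2 > 0. \<forall>\<epsilon>::real. 0 < \<epsilon> \<and> \<epsilon> < 1 \<longrightarrow>
         (\<forall>t::nat. real t \<ge> C1 + C2 * ln (1 / \<epsilon>) \<longrightarrow>
            (\<forall>(u, v)\<in>path_edges P1.
               nu_f E p t u v \<ge> 1 - \<epsilon> \<and> nu_b E p t u v \<ge> 1 - \<epsilon>))"
    proof (rule part1[OF lam])
      show "\<forall>t. F t = lam ^ t * F 0" unfolding F_def using fe by blast
      show "\<forall>t. B t = lam ^ t * B 0" unfolding B_def using be by blast
      show "F 0 > 0" "B 0 > 0" unfolding F_def B_def using f0 by auto
    qed
  qed
next
  show "\<exists>K :: real \<Rightarrow> nat \<Rightarrow> real. (\<forall>\<delta> n. K \<delta> n > 0) \<and>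
     (\<forall>(V :: nat set) E s d P1 P2 l \<delta> p f b (\<alpha>::real).
      pp_setup V E s d P1 P2 l \<delta> p f b \<and> \<alpha> > 0 \<and>
      (\<forall>t. f t s = f 0 s + \<alpha> * real t \<and> b t d = b 0 d + \<alpha> * real t) \<longrightarrow>
      (\<exists>C > 0. \<forall>\<epsilon>::real. 0 < \<epsilon> \<and> \<epsilon> < 1 \<longrightarrow>
         (\<forall>t::nat. real t \<ge> C * (1 / \<epsilon>) powr K \<delta> (path_len P2) \<longrightarrow>
            (\<forall>(u, v)\<in>path_edges P1.
               nu_f E p t u v \<ge> 1 - \<epsilon> \<and> nu_b E p t u v \<ge> 1 - \<epsilon>))))"
  proof (rule exI[of _ Kf], intro conjI allI impI)
    fix \<delta> n show "Kf \<delta> n > 0" by (rule Kf_pos)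
  next
    fix V :: "nat set" and E s d P1 P2 l \<delta> p f b and \<alpha> :: real
    assume h: "pp_setup V E s d P1 P2 l \<delta> p f b \<and> \<alpha> > 0 \<and>
      (\<forall>t. f t s = f 0 s + \<alpha> * real t \<and> b t d = b 0 d + \<alpha> * real t)"
    have pp: "pp_setup V E s d P1 P2 l \<delta> p f b" and al: "\<alpha> > 0"
      and fe: "\<forall>t. f t s = f 0 s + \<alpha> * real t" and be: "\<forall>t. b t d = b 0 d + \<alpha> * real t" using h by blast+
    have f0: "f 0 s > 0" "b 0 d > 0" using pp unfolding pp_setup_def by auto
    have Fnn: "\<forall>t. f t s \<ge> 0"
    proof
      fix t have "f 0 s + \<alpha> * real t \<ge> 0" using al f0 by simp
      then show "f t s \<ge> 0" using fe by (metis (no_types))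
    qed
    have Bnn: "\<forall>t. b t d \<ge> 0"
    proof
      fix t have "b 0 d + \<alpha> * real t \<ge> 0" using al f0 by simp
      then show "b t d \<ge> 0" using be by (metis (no_types))
    qed
    interpret PPD V E s d P1 P2 l \<delta> p f b using pp Fnn Bnn by unfold_locales
    show "\<exists>C > 0. \<forall>\<epsilon>::real. 0 < \<epsilon> \<and> \<epsilon> < 1 \<longrightarrow>
         (\<forall>t::nat. real t \<ge> C * (1 / \<epsilon>) powr Kf \<delta> (path_len P2) \<longrightarrow>
            (\<forall>(u, v)\<in>path_edges P1.
               nu_f E p t u v \<ge> 1 - \<epsilon> \<and> nu_b E p t u v \<ge> 1 - \<epsilon>))"
    proof (rule part2[OF al])
      show "\<forall>t. F t = F 0 + \<alpha> * real t" unfolding F_def using fe by blast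
      show "\<forall>t. B t = B 0 + \<alpha> * real t" unfolding B_def using be by blast
      show "F 0 > 0" "B 0 > 0" unfolding F_def B_def using f0 by auto
    qed
  qed
qed


end
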